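(* Let $p\geq 2$ and $q\in\,]1,2]$ with $\frac1p+\frac1q=1$. Let $\mathcal{C}\subset\mathbb{R}^m$ be a centrally symmetric compact convex set with nonempty interior. The following assertions are equivalent: (a) (Set mid-convex property) There exists $\alpha>0$ such that for all $x,y\in\mathcal{C}$, $\frac{x+y}{2}+\alpha\|x-y\|_{\mathcal{C}}^p\,B_{\|\cdot\|_{\mathcal{C}}}(1)\subset\mathcal{C}$. (b) (Global scaling inequality) There exists $\alpha>0$ such that for all $x\in\mathcal{C}$, $y\in\partial\mathcal{C}$ and $d\in\mathbb{R}^m$ with $d\in N_{\mathcal{C}}(y)$ (equivalently $y\in\arg\max_{v\in\mathcal{C}}\langle d,v\rangle$), we have $\langle d, y-x\rangle\geq \alpha\|d\|_{\mathcal{C}^\circ}\|y-x\|_{\mathcal{C}}^p$. (c) (Set modulus UC) There exists $\alpha>0$ such that $\delta_{\|\cdot\|_{\mathcal{C}}}(\epsilon)\geq\alpha\epsilon^p$ for every $\epsilon\in[0,2]$. (d) (Support Hölder-smooth on the sphere) There exists $c>0$ such that $\sigma_{\mathcal{C}}$ is differentiable at every point of $S_{\|\cdot\|_{\mathcal{C}^\circ}}(1)$ and for all $d_1,d_2\in S_{\|\cdot\|_{\mathcal{C}^\circ}}(1)$, $\|\nabla\sigma_{\mathcal{C}}(d_1)-\nabla\sigma_{\mathcal{C}}(d_2)\|_{\mathcal{C}}\leq c\,\|d_1-d_2\|_{\mathcal{C}^\circ}^{q-1}=c\,\|d_1-d_2\|_{\mathcal{C}^\circ}^{1/(p-1)}$.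 (e) (Support US) $\sigma_{\mathcal{C}}^q$ is differentiable on $\mathbb{R}^m$ and there exists $c>0$ such that $\sigma_{\mathcal{C}}^q$ is $(c,q)$-uniformly smooth on $\mathbb{R}^m$ with respect to $\|\cdot\|_{\mathcal{C}^\circ}$, i.e. for all $d,d'\in\mathbb{R}^m$ and $\lambda\in[0,1]$, $\sigma_{\mathcal{C}}^q(\lambda d+(1-\lambda)d')+\frac{c}{q}\lambda(1-\lambda)\|d-d'\|_{\mathcal{C}^\circ}^q\geq\lambda\sigma_{\mathcal{C}}^q(d)+(1-\lambda)\sigma_{\mathcal{C}}^q(d')$. (f) (Gauge UC) There exists $\alpha>0$ such that $\|\cdot\|_{\mathcal{C}}^p$ is $(\alpha,p)$-uniformly convex with respect to $\|\cdot\|_{\mathcal{C}}$, i.e. for all $x,y\in\mathbb{R}^m$ and $\lambda\in[0,1]$, $\|\lambda x+(1-\lambda)y\|_{\mathcal{C}}^p+\frac{\alpha}{p}\lambda(1-\lambda)\|x-y\|_{\mathcal{C}}^p\leq\lambda\|x\|_{\mathcal{C}}^p+(1-\lambda)\|y\|_{\mathcal{C}}^p$.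
   Context: For a centrally symmetric compact convex body $\mathcal{C}\subset\mathbb{R}^m$ with nonempty interior, its gauge $\|x\|_{\mathcal{C}}=\inf\{\lambda\geq0: x\in\lambda\mathcal{C}\}$ is a norm whose unit ball is $\mathcal{C}$. The polar is $\mathcal{C}^\circ=\{d:\langle x,d\rangle\leq1\ \forall x\in\mathcal{C}\}$; the support function is $\sigma_{\mathcal{C}}(d)=\sup_{v\in\mathcal{C}}\langle v,d\rangle$, and $\sigma_{\mathcal{C}}=\|\cdot\|_{\mathcal{C}^\circ}$, which is the dual norm of $\|\cdot\|_{\mathcal{C}}$. For a norm $\|\cdot\|$, $B_{\|\cdot\|}(1)$ and $S_{\|\cdot\|}(1)$ denote its closed unit ball and unit sphere. The normal cone at $y\in\mathcal{C}$ is $N_{\mathcal{C}}(y)=\{d:\langle d,x-y\rangle\leq0\ \forall x\in\mathcal{C}\}$. The modulus of convexity of $\|\cdot\|_{\mathcal{C}}$ is, for $\epsilon\in[0,2]$, $\delta_{\|\cdot\|_{\mathcal{C}}}(\epsilon)=\inf\{1-\|(x+y)/2\|_{\mathcal{C}}: \|x\|_{\mathcal{C}}=\|y\|_{\mathcal{C}}=1,\ \|x-y\|_{\mathcal{C}}\geq\epsilon\}$. *)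

theory Defs
  imports "HOL-Analysis.Analysis"
begin

definition gauge :: "'a::real_vector set \<Rightarrow> 'a \<Rightarrow> real" where
  "gauge C x = Inf {t. t \<ge> 0 \<and> x \<in> (\<lambda>v. t *\<^sub>R v) ` C}"

definition polar :: "'a::real_inner set \<Rightarrow> 'a set" where
  "polar C = {d. \<forall>x\<in>C. inner x d \<le> 1}"

definition support_fun :: "'a::real_inner set \<Rightarrow> 'a \<Rightarrow> real" where
  "support_fun C d = Sup ((\<lambda>v. inner v d) ` C)"

definition normal_cone :: "'a::real_inner set \<Rightarrow> 'a \<Rightarrow> 'a set" where
  "normal_cone C y = {d. \<forall>x\<in>C. inner d (x - y) \<le> 0}"

definition modulus_convexity :: "'a::real_vector set \<Rightarrow> real \<Rightarrow> real" where
  "modulus_convexity C \<epsilon> = Inf {1 - gauge C ((1/2) *\<^sub>R (x + y)) | x y.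
      gauge C x = 1 \<and> gauge C y = 1 \<and> gauge C (x - y) \<ge> \<epsilon>}"

definition grad :: "('a::real_inner \<Rightarrow> real) \<Rightarrow> 'a \<Rightarrow> 'a" where
  "grad f x = (THE g. (f has_derivative (\<lambda>h. inner g h)) (at x))"

end

theory Submission
  imports Defs
begin
lemma sub_powr:
  fixes a b k :: real
  assumes "0 < k" "k \<le> 1" "0 \<le> a" "0 \<le> b"
  shows "(a + b) powr k \<le> a powr k + b powr k"
proof (cases "a + b = 0")
  case True then show ?thesis using assms by auto
next
  case False
  define c where "c = a + b"
  have c: "c > 0" using False assms c_def by auto
  have "a / c \<le> (a/c) powr k"
    using powr_mono'[of k 1 "a/c"] assms c c_def by (auto simp: divide_le_eq_1)
  moreover have "b / c \<le> (b/c) powr k"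
    using powr_mono'[of k 1 "b/c"] assms c c_def by (auto simp: divide_le_eq_1)
  moreover have "a/c + b/c = 1" using c unfolding c_def by (simp add: add_divide_distrib[symmetric])
  ultimately have "1 \<le> (a/c) powr k + (b/c) powr k"
    by linarith
  hence "c powr k * 1 \<le> c powr k * ((a/c) powr k + (b/c) powr k)"
    using c by (intro mult_left_mono) auto
  also have "\<dots> = a powr k + b powr k"
    using c assms by (simp add: powr_divide distrib_left)
  finally show ?thesis using c_def by simp
qed

lemma sup_powr:
  fixes a b k :: real
  assumes "1 \<le> k" "0 \<le> a" "0 \<le> b"
  shows "a powr k + b powr k \<le> (a + b) powr k"
proof (cases "a + b = 0")
  case True
  then have "a = 0" "b = 0" using assms by auto
  then show ?thesis using assms by simp
next
  case False
  define c where "c = a + b"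
  have c: "c > 0" using False assms c_def by auto
  have "(a/c) powr k \<le> a / c"
    using powr_mono'[of 1 k "a/c"] assms c c_def by (auto simp: divide_le_eq_1)
  moreover have "(b/c) powr k \<le> b / c"
    using powr_mono'[of 1 k "b/c"] assms c c_def by (auto simp: divide_le_eq_1)
  moreover have "a/c + b/c = 1" using c unfolding c_def by (simp add: add_divide_distrib[symmetric])
  ultimately have "(a/c) powr k + (b/c) powr k \<le> 1"
    by linarith
  hence "c powr k * ((a/c) powr k + (b/c) powr k) \<le> c powr k * 1"
    using c by (intro mult_left_mono) auto
  moreover have "c powr k * ((a/c) powr k + (b/c) powr k) = a powr k + b powr k"
    using c assms by (simp add: powr_divide distrib_left)
  ultimately show ?thesis using c_def by simp
qed

lemma tan_powr:
  fixes k u w :: real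
  assumes "1 \<le> k" "0 \<le> u" "0 \<le> w"
  shows "w powr k + k * w powr (k - 1) * (u - w) \<le> u powr k"
proof -
  consider "w = 0" | "u = 0" "w > 0" | "u > 0" "w > 0" using assms by linarith
  then show ?thesis
  proof cases
    case 1 then show ?thesis using assms by simp
  next
    case 2
    have "w powr (k - 1) * w = w powr k"
      using 2 by (simp add: powr_diff)
    hence "w powr k + k * w powr (k - 1) * (u - w) = (1 - k) * w powr k"
      using 2 by (simp add: algebra_simps)
    also have "\<dots> \<le> 0" using assms by (simp add: mult_nonpos_nonneg)
    finally show ?thesis using 2 by simp
  next
    case 3
    define f where "f x = x powr k - k * w powr (k - 1) * x" for x :: real
    have der: "DERIV f x :> k * x powr (k - 1) - k * w powr (k - 1)" if "x > 0" for x
      unfolding f_def using that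
      by (auto intro!: derivative_eq_intros)
    have "f w \<le> f u"
    proof (cases "w \<le> u")
      case True
      show ?thesis
      proof (rule DERIV_nonneg_imp_increasing_open[OF True])
        fix x assume x: "w < x" "x < u"
        have "w powr (k-1) \<le> x powr (k-1)" using x 3 assms by (intro powr_mono2) auto
        then show "\<exists>y. DERIV f x :> y \<and> 0 \<le> y"
          using der[of x] x 3 assms by (intro exI[of _ "k * x powr (k - 1) - k * w powr (k - 1)"]) auto
      next
        show "continuous_on {w..u} f" unfolding f_def using 3
          by (intro continuous_intros) auto
      qed
    next
      case False
      hence le: "u \<le> w" by simp
      have "f w \<le> f u"
      proof (rule DERIV_nonpos_imp_decreasing_open[OF le])
        fix x assume x: "u < x" "x < w"
        have "x powr (k-1) \<le> w powr (k-1)" using x 3 assms by (intro powr_mono2) auto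
        then show "\<exists>y. DERIV f x :> y \<and> y \<le> 0"
          using der[of x] x 3 assms by (intro exI[of _ "k * x powr (k - 1) - k * w powr (k - 1)"]) auto
      next
        show "continuous_on {u..w} f" unfolding f_def using 3
          by (intro continuous_intros) auto
      qed
      then show ?thesis .
    qed
    moreover have "w powr (k - 1) * w = w powr k"
      using 3 by (simp add: powr_diff)
    ultimately show ?thesis unfolding f_def by (simp add: algebra_simps)
  qed
qed

lemma S_powr:
  fixes p r :: real
  assumes "2 \<le> p" "0 \<le> r"
  shows "1 + p * (r - 1) + \<bar>r - 1\<bar> powr p \<le> r powr p"
proof (cases "1 \<le> r")
  case True
  define f where "f x = x powr p - 1 - p * (x - 1) - (x - 1) powr p" for x :: real
  have "f 1 \<le> f r"
  proof (rule DERIV_nonneg_imp_increasing_open[OF True])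
    fix x assume x: "1 < x" "x < r"
    have d: "DERIV f x :> p * x powr (p - 1) - p - p * (x - 1) powr (p - 1)"
      unfolding f_def using x by (auto intro!: derivative_eq_intros)
    have "1 powr (p-1) + (x - 1) powr (p - 1) \<le> (1 + (x - 1)) powr (p - 1)"
      using x assms by (intro sup_powr) auto
    hence "0 \<le> p * (x powr (p - 1) - 1 - (x - 1) powr (p - 1))"
      using assms by (intro mult_nonneg_nonneg) auto
    hence "0 \<le> p * x powr (p - 1) - p - p * (x - 1) powr (p - 1)"
      by (simp add: algebra_simps)
    then show "\<exists>y. DERIV f x :> y \<and> 0 \<le> y" using d by blast
  next
    show "continuous_on {1..r} f" unfolding f_def using assms
      by (intro continuous_intros continuous_on_powr') auto
  qed
  then show ?thesis using True unfolding f_def by simp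
next
  case False
  hence r1: "r \<le> 1" by simp
  define f where "f x = x powr p - 1 - p * (x - 1) - (1 - x) powr p" for x :: real
  have "f 1 \<le> f r"
  proof (rule DERIV_nonpos_imp_decreasing_open[OF r1])
    fix x assume x: "r < x" "x < 1"
    have d: "DERIV f x :> p * x powr (p - 1) - p + p * (1 - x) powr (p - 1)"
      unfolding f_def using x assms by (auto intro!: derivative_eq_intros)
    have "x powr (p-1) + (1 - x) powr (p - 1) \<le> (x + (1 - x)) powr (p - 1)"
      using x assms by (intro sup_powr) auto
    hence "p * (x powr (p - 1) - 1 + (1 - x) powr (p - 1)) \<le> 0"
      using assms by (intro mult_nonneg_nonpos) auto
    hence "p * x powr (p - 1) - p + p * (1 - x) powr (p - 1) \<le> 0"
      by (simp add: algebra_simps)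
    then show "\<exists>y. DERIV f x :> y \<and> y \<le> 0" using d by blast
  next
    show "continuous_on {r..1} f" unfolding f_def using assms
      by (intro continuous_intros continuous_on_powr') auto
  qed
  then show ?thesis using False r1 unfolding f_def by (simp add: abs_if)
qed

lemma opt_powr:
  fixes p q \<gamma> K A :: real
  assumes pq: "(p - 1) * (q - 1) = 1" and "1 < p" "1 < q" and "0 \<le> \<gamma>" "0 < K" "0 \<le> A"
    and H: "\<And>t. t > 0 \<Longrightarrow> t * \<gamma> - K * t powr q \<le> A"
  shows "\<gamma> powr p / (2 * (2 * K) powr (p - 1)) \<le> A"
proof (cases "\<gamma> = 0")
  case True then show ?thesis using assms by simp
next
  case False
  hence g: "\<gamma> > 0" using assms by simp
  define t where "t = (\<gamma> / (2 * K)) powr (p - 1)"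
  have t: "t > 0" using g assms t_def by simp
  have "t powr (q - 1) = (\<gamma> / (2 * K)) powr ((p - 1) * (q - 1))"
    unfolding t_def by (simp add: powr_powr)
  also have "\<dots> = \<gamma> / (2 * K)" using pq g assms by simp
  finally have tq1: "t powr (q - 1) = \<gamma> / (2 * K)" .
  have "t powr q = t powr (q - 1) * t powr 1"
    by (metis add.commute diff_add_cancel powr_add)
  hence tq: "K * t powr q = t * \<gamma> / 2" using tq1 t assms by simp
  have "t * \<gamma> / 2 \<le> A" using H[OF t] tq by linarith
  moreover have "t * \<gamma> / 2 = \<gamma> powr p / (2 * (2 * K) powr (p - 1))"
  proof -
    have "t = \<gamma> powr (p - 1) / (2 * K) powr (p - 1)" unfolding t_def using g assms
      by (simp add: powr_divide)
    moreover have "\<gamma> powr (p - 1) * \<gamma> = \<gamma> powr p" using g by (simp add: powr_diff)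
    ultimately show ?thesis by (simp add: field_simps)
  qed
  ultimately show ?thesis by simp
qed


lemma ldiff:
  fixes f :: "'a::real_inner \<Rightarrow> real"
  assumes q: "1 < q" and M: "0 \<le> M"
    and H: "\<And>z. \<bar>f z - f a - inner G (z - a)\<bar> \<le> M * norm (z - a) powr q"
  shows "(f has_derivative (\<lambda>h. inner G h)) (at a)"
  unfolding has_derivative_iff_norm
proof (intro conjI)
  show "bounded_linear (inner G)" by (rule bounded_linear_inner_right)
  have n0: "((\<lambda>y. norm (y - a)) \<longlongrightarrow> 0) (at a)"
    using tendsto_norm_zero[OF LIM_zero[OF tendsto_ident_at[of a UNIV]]] by simp
  have lim: "((\<lambda>y. M * norm (y - a) powr (q - 1)) \<longlongrightarrow> M * 0) (at a)"
    using q by (intro tendsto_intros tendsto_zero_powrI[where b="q - 1"] n0) auto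
  show "((\<lambda>y. norm (f y - f a - inner G (y - a)) / norm (y - a)) \<longlongrightarrow> 0) (at a)"
  proof (rule tendsto_sandwich[where f="\<lambda>_. 0" and h="\<lambda>y. M * norm (y - a) powr (q - 1)"])
    show "\<forall>\<^sub>F y in at a. 0 \<le> norm (f y - f a - inner G (y - a)) / norm (y - a)" by simp
    show "\<forall>\<^sub>F y in at a. norm (f y - f a - inner G (y - a)) / norm (y - a) \<le> M * norm (y - a) powr (q - 1)"
    proof (rule eventually_at_filter[THEN iffD2], rule always_eventually, intro allI impI)
      fix y assume "y \<noteq> a" "y \<in> UNIV"
      hence n: "norm (y - a) > 0" by simp
      have "norm (y - a) powr q = norm (y - a) powr (q - 1) * norm (y - a)"
        using n by (simp add: powr_diff)
      hence "norm (f y - f a - inner G (y - a)) \<le> (M * norm (y - a) powr (q - 1)) * norm (y - a)"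
        using H[of y] by (simp add: mult.assoc)
      then show "norm (f y - f a - inner G (y - a)) / norm (y - a) \<le> M * norm (y - a) powr (q - 1)"
        using n by (simp add: divide_le_eq)
    qed
  qed (auto simp: lim[simplified])
qed

lemma grad_eq:
  fixes f :: "'a::real_inner \<Rightarrow> real"
  assumes "(f has_derivative (\<lambda>h. inner G h)) (at a)"
  shows "grad f a = G"
  unfolding grad_def
proof (rule the_equality)
  show "(f has_derivative inner G) (at a)" using assms by simp
next
  fix G' assume "(f has_derivative inner G') (at a)"
  hence e: "inner G' = inner G" using has_derivative_unique assms by (metis eta_contract_eq)
  have "inner G' (G' - G) = inner G (G' - G)" using e by simp
  hence "inner (G' - G) (G' - G) = 0" by (simp add: inner_diff_left)
  then show "G' = G" by simp
qed

lemma subgrad: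
  fixes f :: "'a::real_inner \<Rightarrow> real"
  assumes D: "(f has_derivative f') (at a)"
    and S: "\<And>z. f a + inner y (z - a) \<le> f z"
  shows "f' = inner y"
proof -
  have bl: "bounded_linear f'" using D by (simp add: has_derivative_at_alt)
  hence lin: "linear f'" by (simp add: bounded_linear.linear)
  have ge: "inner y h \<le> f' h" for h
  proof (rule ccontr)
    assume "\<not> inner y h \<le> f' h"
    hence eta: "inner y h - f' h > 0" by simp
    hence h0: "h \<noteq> 0" using lin by (auto simp: linear_0)
    define e where "e = (inner y h - f' h) / (2 * norm h)"
    have e: "e > 0" using eta h0 e_def by simp
    obtain \<delta> where d: "\<delta> > 0" "\<And>z. norm (z - a) < \<delta> \<Longrightarrow> norm (f z - f a - f' (z - a)) \<le> e * norm (z - a)"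
      using D e unfolding has_derivative_at_alt by blast
    define t where "t = \<delta> / (2 * norm h)"
    have t: "t > 0" using d h0 t_def by simp
    have n: "norm ((a + t *\<^sub>R h) - a) = t * norm h" using t by simp
    have "t * norm h < \<delta>" using t_def h0 d by simp
    hence "norm ((a + t *\<^sub>R h) - a) < \<delta>" unfolding n .
    from d(2)[OF this] have "norm (f (a + t *\<^sub>R h) - f a - f' ((a + t *\<^sub>R h) - a)) \<le> e * (t * norm h)"
      unfolding n .
    moreover have "f' ((a + t *\<^sub>R h) - a) = t * f' h" using lin by (simp add: linear_scale)
    moreover have "f a + t * inner y h \<le> f (a + t *\<^sub>R h)" using S[of "a + t *\<^sub>R h"] by simp
    moreover have "e * (t * norm h) = t * (inner y h - f' h) / 2" using e_def h0 by simp
    ultimately have "t * inner y h - t * f' h \<le> t * (inner y h - f' h) / 2"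
      unfolding real_norm_def by linarith
    hence "t * (inner y h - f' h) \<le> t * (inner y h - f' h) / 2" by (simp add: right_diff_distrib)
    moreover have "t * (inner y h - f' h) > 0" using t eta by simp
    ultimately show False by linarith
  qed
  have "f' h = inner y h" for h
    using ge[of h] ge[of "-h"] lin by (simp add: linear_neg)
  then show ?thesis by auto
qed


locale cbody =
  fixes C :: "'a::euclidean_space set"
  assumes cpt: "compact C" and cvx: "convex C" and symm: "\<forall>x\<in>C. - x \<in> C"
    and intne: "interior C \<noteq> {}"
begin

abbreviation g where "g \<equiv> gauge C"
abbreviation sf where "sf \<equiv> support_fun C"

lemma closedC: "closed C" using cpt compact_imp_closed by blast

lemma ball0: "\<exists>r>0. cball 0 r \<subseteq> C"
proof -
  obtain a where a: "a \<in> interior C" using intne by auto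
  then obtain e where e: "e > 0" "ball a e \<subseteq> C" using mem_interior by blast
  have "ball 0 e \<subseteq> C"
  proof
    fix w :: 'a assume w: "w \<in> ball 0 e"
    have 1: "a + w \<in> C" using e w by (auto simp: subset_iff dist_norm)
    have "a - w \<in> C" using e w by (auto simp: subset_iff dist_norm)
    hence 2: "-a + w \<in> C" using symm by force
    have "(1/2) *\<^sub>R (a + w) + (1 - 1/2) *\<^sub>R (-a + w) \<in> C"
      using convexD[OF cvx 1 2, of "1/2" "1 - 1/2"] by simp
    moreover have "(1/2) *\<^sub>R (a + w) + (1 - 1/2) *\<^sub>R (-a + w) = w"
      by (simp add: algebra_simps scaleR_2[symmetric])
    ultimately show "w \<in> C" by simp
  qed
  hence "cball 0 (e/2) \<subseteq> C" using e by (auto simp: subset_iff)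
  thus ?thesis using e by (intro exI[of _ "e/2"]) auto
qed

definition rr where "rr = (SOME r. 0 < r \<and> cball 0 r \<subseteq> C)"
lemma rr: "0 < rr" "cball 0 rr \<subseteq> C"
  using someI_ex[OF ball0] unfolding rr_def by auto

definition RR where "RR = (SOME R. 0 < R \<and> (\<forall>x\<in>C. norm x \<le> R))"
lemma RR: "0 < RR" "x \<in> C \<Longrightarrow> norm x \<le> RR"
proof -
  have "\<exists>R. 0 < R \<and> (\<forall>x\<in>C. norm x \<le> R)"
    using compact_imp_bounded[OF cpt] bounded_pos by blast
  from someI_ex[OF this] show "0 < RR" "x \<in> C \<Longrightarrow> norm x \<le> RR" unfolding RR_def by auto
qed

lemma zeroC: "0 \<in> C" using rr by auto
lemma Cne: "C \<noteq> {}" using zeroC by auto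

lemma gT: "t > 0 \<Longrightarrow> x \<in> (\<lambda>v. t *\<^sub>R v) ` C \<longleftrightarrow> x /\<^sub>R t \<in> C"
  by (auto simp: image_iff intro!: bexI[of _ "x /\<^sub>R t"])

lemma gT0: "x \<in> (\<lambda>v. 0 *\<^sub>R v) ` C \<longleftrightarrow> x = 0"
  using Cne by auto

lemma Tne: "\<exists>t. t \<ge> 0 \<and> x \<in> (\<lambda>v. t *\<^sub>R v) ` C"
proof (cases "x = 0")
  case True then show ?thesis using gT0 by (intro exI[of _ 0]) auto
next
  case False
  have "x /\<^sub>R (norm x / rr) \<in> cball 0 rr" using False rr by auto
  then show ?thesis using gT[of "norm x / rr" x] rr False
    by (intro exI[of _ "norm x / rr"]) auto
qed

lemma Tbdd: "bdd_below {t. t \<ge> 0 \<and> x \<in> (\<lambda>v. t *\<^sub>R v) ` C}"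
  by (rule bdd_belowI[of _ 0]) auto

lemma g_nonneg: "0 \<le> g x"
  unfolding gauge_def using Tne[of x] by (intro cInf_greatest) auto

lemma g_zero[simp]: "g 0 = 0"
proof -
  have "g 0 \<le> 0" unfolding gauge_def
    by (rule cInf_lower[OF _ Tbdd]) (use gT0 in auto)
  thus ?thesis using g_nonneg[of 0] by simp
qed

lemma g_lt: assumes "g x < t" "t > 0" shows "x /\<^sub>R t \<in> C"
proof -
  obtain t0 where t0: "t0 \<ge> 0" "x \<in> (\<lambda>v. t0 *\<^sub>R v) ` C" "t0 < t"
    using cInf_lessD[of "{t. t \<ge> 0 \<and> x \<in> (\<lambda>v. t *\<^sub>R v) ` C}" t] Tne[of x] assms
    unfolding gauge_def by auto
  show ?thesis
  proof (cases "t0 = 0")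
    case True then show ?thesis using t0 gT0 zeroC by auto
  next
    case False
    hence xt: "x /\<^sub>R t0 \<in> C" using t0 gT by auto
    have "(t0/t) *\<^sub>R (x /\<^sub>R t0) + (1 - t0/t) *\<^sub>R 0 \<in> C"
      using t0 assms False by (intro convexD[OF cvx xt zeroC]) auto
    moreover have "(t0/t) *\<^sub>R (x /\<^sub>R t0) + (1 - t0/t) *\<^sub>R 0 = ((t0/t) * inverse t0) *\<^sub>R x"
      by simp
    moreover have "(t0/t) * inverse t0 = inverse t" using False by (simp add: field_simps)
    ultimately show ?thesis by simp
  qed
qed

lemma g_le_iff: assumes "t > 0" shows "g x \<le> t \<longleftrightarrow> x /\<^sub>R t \<in> C"
proof
  assume "x /\<^sub>R t \<in> C"
  then show "g x \<le> t" unfolding gauge_def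
    using assms gT by (intro cInf_lower[OF _ Tbdd]) auto
next
  assume le: "g x \<le> t"
  define f where "f n = inverse (t + inverse (real (Suc n))) *\<^sub>R x" for n
  have "\<forall>n. f n \<in> C"
  proof
    fix n
    have "0 < inverse (real (Suc n))" by simp
    hence "g x < t + inverse (real (Suc n))" using le by linarith
    moreover have "t + inverse (real (Suc n)) > 0" using assms by (simp add: add_pos_pos)
    ultimately show "f n \<in> C" unfolding f_def using g_lt by blast
  qed
  moreover have "f \<longlonglongrightarrow> inverse (t + 0) *\<^sub>R x" unfolding f_def using assms
    by (intro tendsto_intros LIMSEQ_inverse_real_of_nat) auto
  ultimately show "x /\<^sub>R t \<in> C" using closed_sequentially[OF closedC] by (simp add: inverse_eq_divide) blast
qed

lemma g_inC: "x \<in> C \<longleftrightarrow> g x \<le> 1" using g_le_iff[of 1] by simp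

lemma g_lower: "norm x / RR \<le> g x"
proof (cases "x = 0")
  case True then show ?thesis by simp
next
  case False
  show ?thesis unfolding gauge_def
  proof (rule cInf_greatest)
    show "{t. t \<ge> 0 \<and> x \<in> (\<lambda>v. t *\<^sub>R v) ` C} \<noteq> {}" using Tne by auto
  next
    fix t assume t: "t \<in> {t. t \<ge> 0 \<and> x \<in> (\<lambda>v. t *\<^sub>R v) ` C}"
    hence "t \<noteq> 0" using False gT0 by auto
    hence t0: "t > 0" using t by auto
    hence "x /\<^sub>R t \<in> C" using t gT by auto
    hence "norm (x /\<^sub>R t) \<le> RR" using RR(2) by blast
    hence "norm x \<le> RR * t" using t0 by (simp add: field_simps)
    then show "norm x / RR \<le> t" using RR by (simp add: field_simps)
  qed
qed

lemma g_pos: "x \<noteq> 0 \<Longrightarrow> 0 < g x"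
  using g_lower[of x] RR by (smt (verit) divide_pos_pos zero_less_norm_iff)

lemma g_eq0: "g x = 0 \<longleftrightarrow> x = 0" using g_pos by force

lemma g_upper: "g x \<le> norm x / rr"
proof (cases "x = 0")
  case True then show ?thesis by simp
next
  case False
  have "x /\<^sub>R (norm x / rr) \<in> cball 0 rr" using False rr by auto
  then show ?thesis using g_le_iff[of "norm x / rr" x] rr False by auto
qed

lemma g_self: "x \<noteq> 0 \<Longrightarrow> x /\<^sub>R g x \<in> C"
  using g_le_iff[of "g x" x] g_pos by auto

lemma g_neg_le: "g (- x) \<le> g x"
proof (cases "x = 0")
  case True then show ?thesis by simp
next
  case False
  have "- (x /\<^sub>R g x) \<in> C" using g_self[OF False] symm by blast
  then show ?thesis using g_le_iff[of "g x" "-x"] g_pos[OF False] by simp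
qed

lemma g_neg[simp]: "g (- x) = g x"
  using g_neg_le[of x] g_neg_le[of "-x"] by simp

lemma g_commute: "g (x - y) = g (y - x)"
  by (metis g_neg minus_diff_eq)

lemma g_scale_le: assumes "c > 0" shows "g (c *\<^sub>R x) \<le> c * g x"
proof (cases "x = 0")
  case True then show ?thesis by simp
next
  case False
  have eq: "(c *\<^sub>R x) /\<^sub>R (c * g x) = x /\<^sub>R g x" using assms by simp
  have "g (c *\<^sub>R x) \<le> c * g x \<longleftrightarrow> (c *\<^sub>R x) /\<^sub>R (c * g x) \<in> C"
    using g_le_iff[of "c * g x" "c *\<^sub>R x"] g_pos[OF False] assms by simp
  then show ?thesis unfolding eq using g_self[OF False] by blast
qed

lemma g_scale_pos: assumes "c > 0" shows "g (c *\<^sub>R x) = c * g x"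
proof -
  have "g x = g (inverse c *\<^sub>R (c *\<^sub>R x))" using assms by simp
  also have "\<dots> \<le> inverse c * g (c *\<^sub>R x)" using assms by (intro g_scale_le) auto
  finally have "c * g x \<le> g (c *\<^sub>R x)" using assms by (simp add: field_simps)
  thus ?thesis using g_scale_le[OF assms, of x] by linarith
qed

lemma g_scale: "g (c *\<^sub>R x) = \<bar>c\<bar> * g x"
proof -
  consider "c > 0" | "c = 0" | "c < 0" by linarith
  then show ?thesis
  proof cases
    case 3
    have "g (c *\<^sub>R x) = g (- ((- c) *\<^sub>R x))" by simp
    also have "\<dots> = (-c) * g x" using 3 g_neg g_scale_pos[of "-c" x] by simp
    finally show ?thesis using 3 by simp
  qed (auto simp: g_scale_pos)
qed

lemma g_tri: "g (x + y) \<le> g x + g y"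
proof (cases "x = 0 \<or> y = 0")
  case True then show ?thesis by auto
next
  case False
  hence a: "g x > 0" "g y > 0" using g_pos by auto
  define s where "s = g x + g y"
  have s: "s > 0" using a s_def by simp
  have "(g x / s) *\<^sub>R (x /\<^sub>R g x) + (g y / s) *\<^sub>R (y /\<^sub>R g y) \<in> C"
    using a s s_def False g_self
    by (intro convexD[OF cvx]) (auto simp: add_divide_distrib[symmetric])
  moreover have "(g x / s) *\<^sub>R (x /\<^sub>R g x) + (g y / s) *\<^sub>R (y /\<^sub>R g y) = (x + y) /\<^sub>R s"
    using a s by (simp add: scaleR_add_right inverse_eq_divide)
  ultimately show ?thesis using g_le_iff[OF s] s_def by simp
qed

lemma g_diff_tri: "g x - g y \<le> g (x - y)"
  using g_tri[of "x - y" y] by simp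

lemma g_C2: "x \<in> C \<Longrightarrow> y \<in> C \<Longrightarrow> g (x - y) \<le> 2"
  using g_tri[of x "-y"] g_inC by simp

lemma sf_bdd: "bdd_above ((\<lambda>v. inner v d) ` C)"
proof (rule bdd_aboveI2)
  fix v assume "v \<in> C"
  hence "norm v \<le> RR" using RR by auto
  hence "norm v * norm d \<le> RR * norm d" by (simp add: mult_right_mono)
  then show "inner v d \<le> RR * norm d" using norm_cauchy_schwarz[of v d] by linarith
qed

lemma sf_upper: "x \<in> C \<Longrightarrow> inner x d \<le> sf d"
  unfolding support_fun_def by (rule cSUP_upper[OF _ sf_bdd])

lemma sf_least: "(\<And>x. x \<in> C \<Longrightarrow> inner x d \<le> a) \<Longrightarrow> sf d \<le> a"
  unfolding support_fun_def using Cne by (intro cSUP_least) auto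

lemma sf_attain: "\<exists>y\<in>C. inner y d = sf d"
proof -
  have "continuous_on C (\<lambda>v. inner v d)" by (intro continuous_intros)
  then obtain y where y: "y \<in> C" "\<And>z. z \<in> C \<Longrightarrow> inner z d \<le> inner y d"
    using continuous_attains_sup[OF cpt Cne, of "\<lambda>v. inner v d"] by blast
  have "sf d \<le> inner y d" using y by (intro sf_least) auto
  then show ?thesis using y sf_upper[of y d] by (intro bexI[of _ y]) auto
qed

lemma sf_lower: "rr * norm d \<le> sf d"
proof (cases "d = 0")
  case True then show ?thesis using sf_upper[OF zeroC, of d] by simp
next
  case False
  have "(rr / norm d) *\<^sub>R d \<in> C" using rr False by (auto simp: subset_iff)
  from sf_upper[OF this, of d] show ?thesis using False
    by (simp add: power2_norm_eq_inner[symmetric] power2_eq_square)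
qed

lemma sf_nonneg: "0 \<le> sf d" using sf_lower[of d] rr by (smt (verit) mult_nonneg_nonneg norm_ge_zero)
lemma sf_pos: "d \<noteq> 0 \<Longrightarrow> 0 < sf d" using sf_lower[of d] rr
  by (smt (verit) mult_pos_pos zero_less_norm_iff)

lemma sf_zero[simp]: "sf 0 = 0"
  using sf_least[of 0 0] sf_nonneg[of 0] by simp

lemma sf_unorm: "sf d \<le> RR * norm d"
proof -
  obtain y where "y \<in> C" "inner y d = sf d" using sf_attain by blast
  moreover have "inner y d \<le> norm y * norm d" using norm_cauchy_schwarz by blast
  moreover have "norm y * norm d \<le> RR * norm d" using RR \<open>y \<in> C\<close> by (simp add: mult_right_mono)
  ultimately show ?thesis by linarith
qed

lemma sf_scale_pos: assumes "c \<ge> 0" shows "sf (c *\<^sub>R d) = c * sf d"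
proof -
  obtain y where y: "y \<in> C" "inner y d = sf d" using sf_attain by blast
  obtain z where z: "z \<in> C" "inner z (c *\<^sub>R d) = sf (c *\<^sub>R d)" using sf_attain by blast
  have "sf (c *\<^sub>R d) = c * inner z d" using z by simp
  also have "\<dots> \<le> c * sf d" using assms sf_upper[OF z(1)] by (simp add: mult_left_mono)
  finally have 1: "sf (c *\<^sub>R d) \<le> c * sf d" .
  have "c * sf d = inner y (c *\<^sub>R d)" using y by simp
  also have "\<dots> \<le> sf (c *\<^sub>R d)" using sf_upper[OF y(1)] by blast
  finally show ?thesis using 1 by simp
qed

lemma sf_add: "sf (a + b) \<le> sf a + sf b"
proof -
  obtain z where z: "z \<in> C" "inner z (a + b) = sf (a + b)" using sf_attain by blast
  then show ?thesis using sf_upper[OF z(1), of a] sf_upper[OF z(1), of b]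
    by (simp add: inner_add_right)
qed

lemma sf_neg_le: "sf (- d) \<le> sf d"
proof -
  obtain z where z: "z \<in> C" "inner z (- d) = sf (- d)" using sf_attain by blast
  have "- z \<in> C" using z symm by blast
  then show ?thesis using sf_upper[of "-z" d] z by simp
qed

lemma sf_neg[simp]: "sf (- d) = sf d" using sf_neg_le[of d] sf_neg_le[of "-d"] by simp

lemma sf_commute: "sf (a - b) = sf (b - a)" by (metis sf_neg minus_diff_eq)

lemma sf_diff: "sf a - sf b \<le> sf (a - b)" using sf_add[of "a - b" b] by simp

lemma sf_abs_diff: "\<bar>sf a - sf b\<bar> \<le> sf (a - b)"
  using sf_diff[of a b] sf_diff[of b a] sf_commute[of a b] by linarith

lemma inner_gs: "inner x d \<le> g x * sf d"
proof (cases "x = 0")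
  case True then show ?thesis by simp
next
  case False
  have "inner (x /\<^sub>R g x) d \<le> sf d" using sf_upper[OF g_self[OF False]] .
  then show ?thesis using g_pos[OF False] by (simp add: field_simps)
qed

lemma gp_eq: "gauge (polar C) d = sf d"
proof (cases "d = 0")
  case True
  have "gauge (polar C) 0 \<le> 0" unfolding gauge_def
  proof (rule cInf_lower)
    have "0 \<in> polar C" unfolding polar_def by simp
    then show "0 \<in> {t. 0 \<le> t \<and> 0 \<in> (*\<^sub>R) t ` polar C}" by (auto intro!: image_eqI[of _ _ 0])
  qed (rule bdd_belowI[of _ 0], auto)
  moreover have "0 \<le> gauge (polar C) 0" unfolding gauge_def
    by (rule cInf_greatest) (auto intro!: exI[of _ 0] image_eqI[of _ _ 0] simp: polar_def)
  ultimately show ?thesis using True by simp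
next
  case False
  have pol: "w \<in> polar C \<longleftrightarrow> sf w \<le> 1" for w
    unfolding polar_def using sf_upper sf_least by (auto intro: order_trans)
  have "{t. 0 \<le> t \<and> d \<in> (*\<^sub>R) t ` polar C} = {sf d..}"
  proof (intro set_eqI iffI)
    fix t assume t: "t \<in> {t. 0 \<le> t \<and> d \<in> (*\<^sub>R) t ` polar C}"
    then obtain w where w: "w \<in> polar C" "d = t *\<^sub>R w" by auto
    hence "t \<noteq> 0" using False by auto
    hence "t > 0" using t by auto
    then show "t \<in> {sf d..}" using w pol sf_scale_pos[of t w] by auto
  next
    fix t assume t: "t \<in> {sf d..}"
    have sp: "sf d > 0" using sf_pos[OF False] .
    hence tp: "t > 0" using t by auto
    have "sf (d /\<^sub>R t) = sf d / t" using sf_scale_pos[of "inverse t" d] tp by (simp add: field_simps)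
    also have "\<dots> \<le> 1" using t tp by auto
    finally have "d /\<^sub>R t \<in> polar C" using pol by blast
    moreover have "d = t *\<^sub>R (d /\<^sub>R t)" using tp by simp
    ultimately show "t \<in> {t. 0 \<le> t \<and> d \<in> (*\<^sub>R) t ` polar C}" using tp
      by (auto intro!: image_eqI[of d "(*\<^sub>R) t" "d /\<^sub>R t"])
  qed
  then show ?thesis unfolding gauge_def by simp
qed

lemma g1_frontier: assumes "g y = 1" shows "y \<in> frontier C"
proof -
  have yC: "y \<in> C" using assms g_inC by simp
  have "y \<notin> interior C"
  proof
    assume "y \<in> interior C"
    then obtain e where e: "e > 0" "ball y e \<subseteq> C" using mem_interior by blast
    have y0: "y \<noteq> 0" using assms by auto
    define \<delta> where "\<delta> = e / (2 * norm y)"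
    have dp: "\<delta> > 0" using e y0 \<delta>_def by simp
    have "dist y ((1 + \<delta>) *\<^sub>R y) = \<delta> * norm y" using dp
      by (simp add: dist_norm algebra_simps)
    also have "\<dots> < e" using e y0 \<delta>_def by simp
    finally have "(1 + \<delta>) *\<^sub>R y \<in> C" using e by auto
    hence "g ((1 + \<delta>) *\<^sub>R y) \<le> 1" using g_inC by blast
    moreover have "g ((1 + \<delta>) *\<^sub>R y) = 1 + \<delta>" using g_scale_pos[of "1 + \<delta>" y] dp assms by simp
    ultimately show False using dp by simp
  qed
  then show ?thesis using yC closure_subset unfolding frontier_def by auto
qed

lemma frontier_inC: "y \<in> frontier C \<Longrightarrow> y \<in> C"
  using closedC frontier_subset_closed by blast

lemma normal_eq: assumes "d \<in> normal_cone C y" "y \<in> C" shows "inner y d = sf d"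
proof -
  have "sf d \<le> inner y d"
    using assms unfolding normal_cone_def by (intro sf_least) (auto simp: inner_diff_right inner_commute)
  then show ?thesis using sf_upper[OF assms(2), of d] by simp
qed

lemma exists_unit: "\<exists>e::'a. e \<noteq> 0"
  using nonzero_Basis SOME_Basis by blast

lemma DA: "\<exists>v. sf v = 1 \<and> inner w v = g w"
proof (cases "w = 0")
  case True
  obtain e :: 'a where e: "e \<noteq> 0" using exists_unit by blast
  have "sf (e /\<^sub>R sf e) = 1" using sf_pos[OF e] sf_scale_pos[of "inverse (sf e)" e] by simp
  then show ?thesis using True by auto
next
  case False
  define u where "u = w /\<^sub>R g w"
  have gw: "g w > 0" using g_pos[OF False] .
  have gu: "g u = 1" unfolding u_def using g_scale_pos[of "inverse (g w)" w] gw by simp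
  have uf: "u \<in> frontier C" using g1_frontier[OF gu] .
  have uC: "u \<in> C" using gu g_inC by simp
  have ri: "rel_interior C = interior C" using rel_interior_nonempty_interior[OF intne] .
  have "u \<notin> rel_interior C" using uf ri unfolding frontier_def by auto
  moreover have "u \<in> closure C" using uC closure_subset by auto
  ultimately obtain a where a: "a \<noteq> 0" "\<And>y. y \<in> closure C \<Longrightarrow> inner a u \<le> inner a y"
    using supporting_hyperplane_relative_frontier[OF cvx] by metis
  define d where "d = - a"
  have d0: "d \<noteq> 0" using a d_def by simp
  have "sf d \<le> inner u d"
    using a(2) closure_subset unfolding d_def by (intro sf_least) (auto simp: inner_commute)
  hence sfd: "sf d = inner u d" using sf_upper[OF uC, of d] by simp
  have sp: "sf d > 0" using sf_pos[OF d0] .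
  define v where "v = d /\<^sub>R sf d"
  have "sf v = 1" unfolding v_def using sf_scale_pos[of "inverse (sf d)" d] sp by simp
  moreover have "inner w v = g w"
  proof -
    have "w = g w *\<^sub>R u" unfolding u_def using gw by simp
    hence "inner w v = g w * inner u v" by (metis inner_scaleR_left)
    also have "inner u v = 1" unfolding v_def using sfd sp by simp
    finally show ?thesis by simp
  qed
  ultimately show ?thesis by blast
qed

end

lemma powr_split: fixes a k :: real assumes "0 \<le> a" "1 < k" shows "a powr k = a * a powr (k - 1)"
proof (cases "a = 0")
  case False
  have "a powr k = a powr (1 + (k - 1))" by simp
  also have "\<dots> = a powr 1 * a powr (k - 1)" by (rule powr_add)
  finally show ?thesis using assms by simp
qed simp

lemma max_powr: fixes a b p :: real assumes "0 \<le> a" "0 \<le> b" "0 < p"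
  shows "(a + b) powr p \<le> 2 powr p * (a powr p + b powr p)"
proof -
  have "(a + b) powr p \<le> (2 * max a b) powr p" using assms by (intro powr_mono2) auto
  also have "\<dots> = 2 powr p * max a b powr p" using assms by (simp add: powr_mult)
  also have "max a b powr p \<le> a powr p + b powr p" using assms by (auto simp: max_def)
  hence "2 powr p * max a b powr p \<le> 2 powr p * (a powr p + b powr p)" by simp
  finally show ?thesis .
qed

locale ucb = cbody C for C :: "'a::euclidean_space set" +
  fixes p q :: real
  assumes p2: "2 \<le> p" and q1: "1 < q" and q2: "q \<le> 2" and pq: "1/p + 1/q = 1"
begin

lemma pq1: "(p - 1) * (q - 1) = 1"
proof -
  have "q + p = p * q" using pq p2 q1 by (simp add: field_simps)
  then show ?thesis by (simp add: algebra_simps)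
qed

definition "PA = (\<exists>\<alpha>>0. \<forall>x\<in>C. \<forall>y\<in>C.
             {(1/2) *\<^sub>R (x + y) + (\<alpha> * gauge C (x - y) powr p) *\<^sub>R b | b. gauge C b \<le> 1} \<subseteq> C)"
definition "PB = (\<exists>\<alpha>>0. \<forall>x\<in>C. \<forall>y\<in>frontier C. \<forall>d. d \<in> normal_cone C y \<longrightarrow>
             inner d (y - x) \<ge> \<alpha> * gauge (polar C) d * gauge C (y - x) powr p)"
definition "PC = (\<exists>\<alpha>>0. \<forall>\<epsilon>\<in>{0..2}. modulus_convexity C \<epsilon> \<ge> \<alpha> * \<epsilon> powr p)"
definition "PD = (\<exists>c>0. (\<forall>d. gauge (polar C) d = 1 \<longrightarrow> support_fun C differentiable (at d)) \<and>
             (\<forall>d1 d2. gauge (polar C) d1 = 1 \<longrightarrow> gauge (polar C) d2 = 1 \<longrightarrow>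
                gauge C (grad (support_fun C) d1 - grad (support_fun C) d2)
                  \<le> c * gauge (polar C) (d1 - d2) powr (q - 1)))"
definition "PE = ((\<lambda>d. support_fun C d powr q) differentiable_on UNIV \<and>
           (\<exists>c>0. \<forall>d d'. \<forall>l\<in>{0..1}.
              support_fun C (l *\<^sub>R d + (1 - l) *\<^sub>R d') powr q
                + c / q * l * (1 - l) * gauge (polar C) (d - d') powr q
              \<ge> l * support_fun C d powr q + (1 - l) * support_fun C d' powr q))"
definition "PF = (\<exists>\<alpha>>0. \<forall>x y. \<forall>l\<in>{0..1}.
              gauge C (l *\<^sub>R x + (1 - l) *\<^sub>R y) powr p
                + \<alpha> / p * l * (1 - l) * gauge C (x - y) powr p
              \<le> l * gauge C x powr p + (1 - l) * gauge C y powr p)"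
definition "PA' = (\<exists>\<alpha>>0. \<forall>x\<in>C. \<forall>y\<in>C. g ((1/2) *\<^sub>R (x + y)) + \<alpha> * g (x - y) powr p \<le> 1)"
definition "PSB = (\<exists>\<alpha>>0. \<forall>x y d. g x = 1 \<longrightarrow> g y = 1 \<longrightarrow> sf d = 1 \<longrightarrow> inner y d = 1 \<longrightarrow>
               \<alpha> * g (y - x) powr p \<le> inner d (y - x))"

lemma g_unit: "\<exists>e. g e = 1"
proof -
  obtain e :: 'a where e: "e \<noteq> 0" using exists_unit by blast
  have "g (e /\<^sub>R g e) = 1" using g_pos[OF e] g_scale_pos[of "inverse (g e)" e] by simp
  then show ?thesis by blast
qed

lemma g_mid: "g ((1/2) *\<^sub>R (x + y)) \<le> (g x + g y) / 2"
  using g_scale_pos[of "1/2" "x + y"] g_tri[of x y] by simp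

lemma A_A': "PA \<longleftrightarrow> PA'"
proof
  assume "PA"
  then obtain \<alpha> where a: "\<alpha> > 0" and H: "\<And>x y. x \<in> C \<Longrightarrow> y \<in> C \<Longrightarrow>
    {(1/2) *\<^sub>R (x + y) + (\<alpha> * g (x - y) powr p) *\<^sub>R b | b. g b \<le> 1} \<subseteq> C"
    unfolding PA_def by blast
  have "g ((1/2) *\<^sub>R (x + y)) + \<alpha> * g (x - y) powr p \<le> 1" if xy: "x \<in> C" "y \<in> C" for x y
  proof -
    define m where "m = (1/2) *\<^sub>R (x + y)"
    define \<rho> where "\<rho> = \<alpha> * g (x - y) powr p"
    have \<rho>: "\<rho> \<ge> 0" using a \<rho>_def by simp
    have in_C: "m + \<rho> *\<^sub>R b \<in> C" if "g b \<le> 1" for b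
      using H[OF xy] that unfolding m_def \<rho>_def by blast
    show ?thesis
    proof (cases "m = 0")
      case True
      obtain e where e: "g e = 1" using g_unit by blast
      have "g (m + \<rho> *\<^sub>R e) \<le> 1" using in_C[of e] e g_inC by simp
      then show ?thesis using True e \<rho> unfolding m_def[symmetric] \<rho>_def[symmetric] by (simp add: g_scale)
    next
      case False
      have gm: "g m > 0" using g_pos[OF False] .
      have "g (m /\<^sub>R g m) = 1" using g_scale_pos[of "inverse (g m)" m] gm by simp
      hence "g (m + \<rho> *\<^sub>R (m /\<^sub>R g m)) \<le> 1" using in_C[of "m /\<^sub>R g m"] g_inC by simp
      moreover have "m + \<rho> *\<^sub>R (m /\<^sub>R g m) = (1 + \<rho> / g m) *\<^sub>R m"
        by (simp add: algebra_simps divide_inverse)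
      moreover have "g ((1 + \<rho> / g m) *\<^sub>R m) = g m + \<rho>"
      proof -
        have "1 + \<rho> / g m > 0" using gm \<rho> by (simp add: add_pos_nonneg)
        hence "g ((1 + \<rho> / g m) *\<^sub>R m) = (1 + \<rho> / g m) * g m" by (rule g_scale_pos)
        also have "\<dots> = g m + \<rho>" using gm by (simp add: field_simps)
        finally show ?thesis .
      qed
      ultimately show ?thesis unfolding m_def[symmetric] \<rho>_def[symmetric] by simp
    qed
  qed
  then show "PA'" unfolding PA'_def using a by blast
next
  assume "PA'"
  then obtain \<alpha> where a: "\<alpha> > 0" and H: "\<And>x y. x \<in> C \<Longrightarrow> y \<in> C \<Longrightarrow>
     g ((1/2) *\<^sub>R (x + y)) + \<alpha> * g (x - y) powr p \<le> 1"
    unfolding PA'_def by blast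
  have "{(1/2) *\<^sub>R (x + y) + (\<alpha> * g (x - y) powr p) *\<^sub>R b | b. g b \<le> 1} \<subseteq> C"
    if xy: "x \<in> C" "y \<in> C" for x y
  proof clarify
    fix b assume b: "g b \<le> 1"
    define \<rho> where "\<rho> = \<alpha> * g (x - y) powr p"
    have \<rho>: "\<rho> \<ge> 0" using a \<rho>_def by simp
    have "g ((1/2) *\<^sub>R (x + y) + \<rho> *\<^sub>R b) \<le> g ((1/2) *\<^sub>R (x + y)) + \<rho> * g b"
      using g_tri g_scale \<rho> by (metis abs_of_nonneg)
    also have "\<dots> \<le> g ((1/2) *\<^sub>R (x + y)) + \<rho>" using b \<rho> by (simp add: mult_left_le)
    also have "\<dots> \<le> 1" using H[OF xy] \<rho>_def by simp
    finally show "(1/2) *\<^sub>R (x + y) + (\<alpha> * g (x - y) powr p) *\<^sub>R b \<in> C"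
      using g_inC \<rho>_def by simp
  qed
  then show "PA" unfolding PA_def using a by blast
qed

lemma A'_B: assumes "PA'" shows "PB"
proof -
  obtain \<alpha> where a: "\<alpha> > 0" and H: "\<And>x y. x \<in> C \<Longrightarrow> y \<in> C \<Longrightarrow>
     g ((1/2) *\<^sub>R (x + y)) + \<alpha> * g (x - y) powr p \<le> 1"
    using assms unfolding PA'_def by blast
  have "2 * \<alpha> * gauge (polar C) d * g (y - x) powr p \<le> inner d (y - x)"
    if x: "x \<in> C" and y: "y \<in> frontier C" and d: "d \<in> normal_cone C y" for x y d
  proof -
    have yC: "y \<in> C" using frontier_inC y by blast
    obtain b where b: "b \<in> C" "inner b d = sf d" using sf_attain by blast
    define m where "m = (1/2) *\<^sub>R (x + y)"
    define \<rho> where "\<rho> = \<alpha> * g (x - y) powr p"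
    have \<rho>: "\<rho> \<ge> 0" using a \<rho>_def by simp
    have "g (m + \<rho> *\<^sub>R b) \<le> g m + \<rho> * g b"
      using g_tri g_scale \<rho> by (metis abs_of_nonneg)
    also have "\<dots> \<le> g m + \<rho>" using b g_inC \<rho> by (simp add: mult_left_le)
    also have "\<dots> \<le> 1" using H[OF x yC] \<rho>_def m_def by simp
    finally have "m + \<rho> *\<^sub>R b \<in> C" using g_inC by simp
    hence "inner d (m + \<rho> *\<^sub>R b - y) \<le> 0" using d unfolding normal_cone_def by blast
    hence "inner d m + \<rho> * sf d \<le> inner d y" using b
      by (simp add: inner_diff_right inner_add_right inner_commute)
    moreover have "inner d m = (inner d x + inner d y) / 2" unfolding m_def
      by (simp add: inner_add_right)
    ultimately have "2 * (\<rho> * sf d) \<le> inner d (y - x)" unfolding inner_diff_right by argo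
    moreover have "g (x - y) = g (y - x)" using g_commute by blast
    ultimately show ?thesis using gp_eq \<rho>_def by (simp add: mult_ac)
  qed
  then show ?thesis unfolding PB_def using a by (intro exI[of _ "2 * \<alpha>"]) auto
qed

lemma B_SB: assumes "PB" shows "PSB"
proof -
  obtain \<alpha> where a: "\<alpha> > 0" and H: "\<And>x y d. x \<in> C \<Longrightarrow> y \<in> frontier C \<Longrightarrow> d \<in> normal_cone C y \<Longrightarrow>
     \<alpha> * gauge (polar C) d * g (y - x) powr p \<le> inner d (y - x)"
    using assms unfolding PB_def by blast
  have "\<alpha> * g (y - x) powr p \<le> inner d (y - x)"
    if "g x = 1" "g y = 1" "sf d = 1" "inner y d = 1" for x y d
  proof -
    have "x \<in> C" using that g_inC by simp
    moreover have "y \<in> frontier C" using g1_frontier that by blast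
    moreover have "d \<in> normal_cone C y" unfolding normal_cone_def
    proof (intro CollectI ballI)
      fix w assume "w \<in> C"
      hence "inner w d \<le> 1" using sf_upper[of w d] that by simp
      then show "inner d (w - y) \<le> 0" using that by (simp add: inner_diff_right inner_commute)
    qed
    ultimately show ?thesis using H gp_eq that by fastforce
  qed
  then show ?thesis unfolding PSB_def using a by blast
qed

lemma A'_C: assumes "PA'" shows "PC"
proof -
  obtain \<alpha> where a: "\<alpha> > 0" and H: "\<And>x y. x \<in> C \<Longrightarrow> y \<in> C \<Longrightarrow>
     g ((1/2) *\<^sub>R (x + y)) + \<alpha> * g (x - y) powr p \<le> 1"
    using assms unfolding PA'_def by blast
  have "\<alpha> * \<epsilon> powr p \<le> modulus_convexity C \<epsilon>" if e: "\<epsilon> \<in> {0..2}" for \<epsilon>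
    unfolding modulus_convexity_def
  proof (rule cInf_greatest)
    obtain u where u: "g u = 1" using g_unit by blast
    have "g (u - - u) = 2" using g_scale_pos[of 2 u] u by (simp add: scaleR_2)
    hence "g (- u) = 1 \<and> \<epsilon> \<le> g (u - - u)" using u e by simp
    hence "1 - g ((1/2) *\<^sub>R (u + - u)) \<in> {1 - g ((1/2) *\<^sub>R (x + y)) | x y. g x = 1 \<and> g y = 1 \<and> \<epsilon> \<le> g (x - y)}"
      using u by blast
    then show "{1 - g ((1/2) *\<^sub>R (x + y)) | x y. g x = 1 \<and> g y = 1 \<and> \<epsilon> \<le> g (x - y)} \<noteq> {}"
      by blast
  next
    fix t assume "t \<in> {1 - g ((1/2) *\<^sub>R (x + y)) | x y. g x = 1 \<and> g y = 1 \<and> \<epsilon> \<le> g (x - y)}"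
    then obtain x y where xy: "t = 1 - g ((1/2) *\<^sub>R (x + y))" "g x = 1" "g y = 1" "\<epsilon> \<le> g (x - y)"
      by blast
    have "\<epsilon> powr p \<le> g (x - y) powr p" using e xy p2 by (intro powr_mono2) auto
    hence "\<alpha> * \<epsilon> powr p \<le> \<alpha> * g (x - y) powr p" using a by simp
    also have "\<dots> \<le> t" using H[of x y] xy g_inC by simp
    finally show "\<alpha> * \<epsilon> powr p \<le> t" .
  qed
  then show ?thesis unfolding PC_def using a by blast
qed

lemma C_SB: assumes "PC" shows "PSB"
proof -
  obtain \<alpha> where a: "\<alpha> > 0" and H: "\<And>\<epsilon>. \<epsilon> \<in> {0..2} \<Longrightarrow> \<alpha> * \<epsilon> powr p \<le> modulus_convexity C \<epsilon>"
    using assms unfolding PC_def by blast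
  have "2 * \<alpha> * g (y - x) powr p \<le> inner d (y - x)"
    if xy: "g x = 1" "g y = 1" "sf d = 1" "inner y d = 1" for x y d
  proof -
    define \<epsilon> where "\<epsilon> = g (x - y)"
    have e: "\<epsilon> \<in> {0..2}" unfolding \<epsilon>_def using g_nonneg g_C2 xy g_inC by auto
    have "modulus_convexity C \<epsilon> \<le> 1 - g ((1/2) *\<^sub>R (x + y))"
      unfolding modulus_convexity_def
    proof (rule cInf_lower)
      show "1 - g ((1/2) *\<^sub>R (x + y)) \<in> {1 - g ((1/2) *\<^sub>R (x + y)) | x y. g x = 1 \<and> g y = 1 \<and> \<epsilon> \<le> g (x - y)}"
        using xy \<epsilon>_def by blast
      show "bdd_below {1 - g ((1/2) *\<^sub>R (x + y)) | x y. g x = 1 \<and> g y = 1 \<and> \<epsilon> \<le> g (x - y)}"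
      proof (rule bdd_belowI[of _ 0], clarify)
        fix x y :: 'a assume "g x = 1" "g y = 1"
        then show "0 \<le> 1 - g ((1/2) *\<^sub>R (x + y))" using g_mid[of x y] by simp
      qed
    qed
    hence m: "\<alpha> * g (x - y) powr p \<le> 1 - g ((1/2) *\<^sub>R (x + y))" using H[OF e] \<epsilon>_def by simp
    have "inner ((1/2) *\<^sub>R (x + y)) d \<le> g ((1/2) *\<^sub>R (x + y)) * sf d" by (rule inner_gs)
    hence "inner ((1/2) *\<^sub>R (x + y)) d \<le> g ((1/2) *\<^sub>R (x + y))" using xy by simp
    moreover have "inner ((1/2) *\<^sub>R (x + y)) d = (inner x d + inner y d) / 2" by (simp add: inner_add_left)
    ultimately have "(inner x d + inner y d) / 2 \<le> g ((1/2) *\<^sub>R (x + y))" by simp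
    hence "2 * (\<alpha> * g (x - y) powr p) \<le> inner d (y - x)" using m xy
      by (simp add: inner_diff_right inner_commute)
    then show ?thesis using g_commute[of x y] by simp
  qed
  then show ?thesis unfolding PSB_def using a by (intro exI[of _ "2 * \<alpha>"]) auto
qed

lemma F_A': assumes "PF" shows "PA'"
proof -
  obtain \<alpha> where a: "\<alpha> > 0" and H: "\<And>x y l. l \<in> {0..1} \<Longrightarrow>
      g (l *\<^sub>R x + (1 - l) *\<^sub>R y) powr p + \<alpha> / p * l * (1 - l) * g (x - y) powr p
      \<le> l * g x powr p + (1 - l) * g y powr p"
    using assms unfolding PF_def by blast
  have p0: "p > 0" "p \<ge> 1" using p2 by auto
  have "g ((1/2) *\<^sub>R (x + y)) + \<alpha> / (4 * p * p) * g (x - y) powr p \<le> 1"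
    if xy: "x \<in> C" "y \<in> C" for x y
  proof -
    define m where "m = (1/2) *\<^sub>R (x + y)"
    have "(1/2) *\<^sub>R x + (1 - 1/2) *\<^sub>R y = m" unfolding m_def by (simp add: scaleR_add_right)
    hence h: "g m powr p + \<alpha> / p * (1/2) * (1 - 1/2) * g (x - y) powr p
        \<le> (1/2) * g x powr p + (1 - 1/2) * g y powr p" using H[of "1/2" x y] by simp
    have "g x powr p \<le> 1" "g y powr p \<le> 1" using xy g_inC g_nonneg p0 by (auto intro: powr_le1)
    hence h2: "g m powr p + \<alpha> / (4 * p) * g (x - y) powr p \<le> 1" using h by simp
    have "1 + p * (g m - 1) \<le> g m powr p"
      using tan_powr[of p "g m" 1] p0 g_nonneg by simp
    hence "\<alpha> / (4 * p) * g (x - y) powr p \<le> p * (1 - g m)" using h2 by (simp add: algebra_simps)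
    hence "\<alpha> / (4 * p) * g (x - y) powr p / p \<le> 1 - g m" using p0 by (simp add: field_simps)
    then show ?thesis unfolding m_def[symmetric] by (simp add: field_simps)
  qed
  then show ?thesis unfolding PA'_def using a p0 by (intro exI[of _ "\<alpha> / (4 * p * p)"]) auto
qed


lemma SB_F0:
  assumes a: "\<alpha> > 0"
    and H: "\<And>x y d. g x = 1 \<Longrightarrow> g y = 1 \<Longrightarrow> sf d = 1 \<Longrightarrow> inner y d = 1 \<Longrightarrow>
               \<alpha> * g (y - x) powr p \<le> inner d (y - x)"
    and z: "g z = 1" and v: "sf v = 1" "inner z v = 1"
  shows "min (\<alpha>/2) 1 / 3 powr p * g (x - z) powr p \<le> g x powr p - 1 - p * (inner x v - 1)"
proof -
  define \<beta> where "\<beta> = min (\<alpha>/2) 1 / 3 powr p"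
  define r where "r = g x"
  have r0: "r \<ge> 0" unfolding r_def using g_nonneg .
  have p0: "p > 0" "p \<ge> 1" using p2 by auto
  have S: "1 + p * (r - 1) + \<bar>r - 1\<bar> powr p \<le> r powr p" using S_powr[OF p2 r0] .
  have xv: "inner x v \<le> r" using inner_gs[of x v] v r_def by simp
  have b0: "\<beta> \<ge> 0" unfolding \<beta>_def using a by simp
  have "\<beta> * g (x - z) powr p \<le> p * (r - inner x v) + \<bar>r - 1\<bar> powr p"
  proof (cases "r < 1/2")
    case True
    have "g (x - z) \<le> g x + g z" using g_tri[of x "-z"] by simp
    also have "\<dots> \<le> 3 * \<bar>r - 1\<bar>" using True z r_def by simp
    finally have "g (x - z) powr p \<le> (3 * \<bar>r - 1\<bar>) powr p" using p0 g_nonneg by (intro powr_mono2) auto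
    also have "\<dots> = 3 powr p * \<bar>r - 1\<bar> powr p" by (simp add: powr_mult)
    finally have 1: "\<beta> * g (x - z) powr p \<le> \<beta> * (3 powr p * \<bar>r - 1\<bar> powr p)"
      using b0 by (simp add: mult_left_mono)
    have "\<beta> * 3 powr p \<le> 1" unfolding \<beta>_def by simp
    hence "(\<beta> * 3 powr p) * \<bar>r - 1\<bar> powr p \<le> 1 * \<bar>r - 1\<bar> powr p"
      by (intro mult_right_mono) auto
    hence "\<beta> * (3 powr p * \<bar>r - 1\<bar> powr p) \<le> \<bar>r - 1\<bar> powr p" by (simp add: mult.assoc)
    moreover have "0 \<le> p * (r - inner x v)" using xv p0 by simp
    ultimately show ?thesis using 1 by linarith
  next
    case False
    hence rp: "r \<ge> 1/2" by simp
    define x' where "x' = x /\<^sub>R r"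
    have xx: "x = r *\<^sub>R x'" unfolding x'_def using rp by simp
    have gx': "g x' = 1" unfolding x'_def using g_scale_pos[of "inverse r" x] rp r_def by simp
    define b where "b = g (z - x')"
    define a' where "a' = \<bar>r - 1\<bar>"
    have "\<alpha> * b powr p \<le> inner v (z - x')" unfolding b_def using H[OF gx' z v] .
    also have "\<dots> = 1 - inner x v / r" using v xx rp
      by (simp add: inner_diff_right inner_commute x'_def) (simp add: divide_inverse mult.commute)
    finally have "r * (\<alpha> * b powr p) \<le> r * (1 - inner x v / r)" using rp by (simp add: mult_left_mono)
    hence "r * (\<alpha> * b powr p) \<le> r - inner x v" using rp by (simp add: algebra_simps)
    moreover have "(1/2) * (\<alpha> * b powr p) \<le> r * (\<alpha> * b powr p)" using rp a
      by (intro mult_right_mono) auto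
    ultimately have 1: "\<alpha> / 2 * b powr p \<le> r - inner x v" by simp
    have "1 * (r - inner x v) \<le> p * (r - inner x v)" using xv p0
      by (intro mult_right_mono) auto
    hence 2: "r - inner x v \<le> p * (r - inner x v)" by simp
    have "g (x - z) \<le> g (x - x') + g (x' - z)" using g_tri[of "x - x'" "x' - z"] by simp
    also have "g (x - x') = a'" unfolding a'_def
    proof -
      have "x - x' = (r - 1) *\<^sub>R x'" using xx by (simp add: algebra_simps)
      then show "g (x - x') = \<bar>r - 1\<bar>" using g_scale gx' by simp
    qed
    also have "g (x' - z) = b" unfolding b_def using g_commute by blast
    finally have gxz: "g (x - z) \<le> a' + b" .
    have a0: "a' \<ge> 0" "b \<ge> 0" unfolding a'_def b_def using g_nonneg by auto
    have "g (x - z) powr p \<le> (a' + b) powr p" using gxz p0 g_nonneg by (intro powr_mono2) auto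
    also have "\<dots> \<le> 2 powr p * (a' powr p + b powr p)" using max_powr a0 p0 by simp
    finally have 3: "\<beta> * g (x - z) powr p \<le> \<beta> * (2 powr p * (a' powr p + b powr p))"
      using b0 by (simp add: mult_left_mono)
    have "\<beta> * 2 powr p = min (\<alpha>/2) 1 * (2 powr p / 3 powr p)" unfolding \<beta>_def by simp
    also have "2 powr p / 3 powr p \<le> 1" using p0 by (simp add: powr_mono2)
    hence "min (\<alpha>/2) 1 * (2 powr p / 3 powr p) \<le> min (\<alpha>/2) 1"
      by (rule mult_left_le) (use a in simp)
    finally have "\<beta> * 2 powr p \<le> min (\<alpha>/2) 1" .
    hence "(\<beta> * 2 powr p) * (a' powr p + b powr p) \<le> min (\<alpha>/2) 1 * (a' powr p + b powr p)"
      by (intro mult_right_mono) auto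
    hence "\<beta> * (2 powr p * (a' powr p + b powr p)) \<le> min (\<alpha>/2) 1 * (a' powr p + b powr p)"
      by (simp add: mult.assoc)
    also have "\<dots> \<le> \<alpha> / 2 * b powr p + a' powr p"
    proof -
      have "min (\<alpha>/2) 1 * a' powr p \<le> a' powr p" by (intro mult_left_le_one_le) (use a in auto)
      moreover have "min (\<alpha>/2) 1 * b powr p \<le> \<alpha> / 2 * b powr p" by (intro mult_right_mono) auto
      ultimately show ?thesis by (simp add: distrib_left)
    qed
    finally show ?thesis using 1 2 3 unfolding a'_def[symmetric] by linarith
  qed
  then show ?thesis using S \<beta>_def r_def by (simp add: algebra_simps)
qed

definition VV where "VV z = (SOME v. sf v = 1 \<and> inner z v = g z)"
lemma VV: "sf (VV z) = 1" "inner z (VV z) = g z"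
  using someI_ex[OF DA[of z]] unfolding VV_def by auto

lemma SB_F1:
  assumes a: "\<alpha> > 0"
    and H: "\<And>x y d. g x = 1 \<Longrightarrow> g y = 1 \<Longrightarrow> sf d = 1 \<Longrightarrow> inner y d = 1 \<Longrightarrow>
               \<alpha> * g (y - x) powr p \<le> inner d (y - x)"
  shows "min (\<alpha>/2) 1 / 3 powr p * g (x - z) powr p + g z powr p
           + p * g z powr (p - 1) * inner (VV z) (x - z) \<le> g x powr p"
proof -
  define \<beta> where "\<beta> = min (\<alpha>/2) 1 / 3 powr p"
  have p0: "p > 0" "p > 1" using p2 by auto
  have b1: "\<beta> \<le> 1"
  proof -
    have "1 \<le> 3 powr p" using p0 by (simp add: ge_one_powr_ge_zero)
    then show ?thesis unfolding \<beta>_def using a by (simp add: divide_le_eq_1 min_le_iff_disj)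
  qed
  show ?thesis
  proof (cases "z = 0")
    case True
    have "\<beta> * g x powr p \<le> g x powr p"
      by (rule mult_left_le_one_le) (use b1 a in \<open>auto simp: \<beta>_def\<close>)
    then show ?thesis unfolding \<beta>_def[symmetric] using True p0 by simp
  next
    case False
    define \<rho> where "\<rho> = g z"
    have \<rho>: "\<rho> > 0" unfolding \<rho>_def using g_pos[OF False] .
    define v where "v = VV z"
    define xt where "xt = x /\<^sub>R \<rho>"
    define zt where "zt = z /\<^sub>R \<rho>"
    have gzt: "g zt = 1" unfolding zt_def \<rho>_def using g_scale_pos[of "inverse (g z)" z] \<rho> \<rho>_def by simp
    have vzt: "inner zt v = 1" unfolding zt_def v_def using VV[of z] \<rho> \<rho>_def by simp
    have F0: "\<beta> * g (xt - zt) powr p \<le> g xt powr p - 1 - p * (inner xt v - 1)"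
      unfolding \<beta>_def using SB_F0[OF a H gzt _ vzt] VV v_def by blast
    have e1: "g x = \<rho> * g xt" unfolding xt_def using g_scale_pos[of \<rho> "x /\<^sub>R \<rho>"] \<rho> by simp
    have e2: "g (x - z) = \<rho> * g (xt - zt)" unfolding xt_def zt_def
      using g_scale_pos[of \<rho> "x /\<^sub>R \<rho> - z /\<^sub>R \<rho>"] \<rho> by (simp add: algebra_simps)
    define P where "P = \<rho> powr (p - 1)"
    have rp: "\<rho> powr p = \<rho> * P" unfolding P_def using powr_split[of \<rho> p] \<rho> p0 by simp
    have e3: "g x powr p = \<rho> powr p * g xt powr p" using e1 \<rho> g_nonneg by (simp add: powr_mult)
    have e4: "g (x - z) powr p = \<rho> powr p * g (xt - zt) powr p" using e2 \<rho> g_nonneg by (simp add: powr_mult)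
    have vz: "inner v z = \<rho>" using VV(2)[of z] unfolding v_def \<rho>_def by (simp add: inner_commute)
    have e5: "inner v (x - z) = \<rho> * (inner xt v - 1)"
      using vz \<rho> unfolding xt_def
      by (simp add: inner_diff_right inner_commute field_simps)
    have "\<rho> powr p * (\<beta> * g (xt - zt) powr p) \<le> \<rho> powr p * (g xt powr p - 1 - p * (inner xt v - 1))"
      using F0 by (simp add: mult_left_mono)
    hence "\<beta> * g (x - z) powr p \<le> g x powr p - \<rho> powr p - p * P * inner v (x - z)"
      unfolding e3 e4 e5 rp by (simp add: algebra_simps)
    then show ?thesis unfolding \<beta>_def v_def P_def \<rho>_def by (simp add: algebra_simps)
  qed
qed

lemma SB_F: assumes "PSB" shows "PF"
proof -
  obtain \<alpha> where a: "\<alpha> > 0" and H: "\<And>x y d. g x = 1 \<Longrightarrow> g y = 1 \<Longrightarrow> sf d = 1 \<Longrightarrow> inner y d = 1 \<Longrightarrow>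
               \<alpha> * g (y - x) powr p \<le> inner d (y - x)"
    using assms unfolding PSB_def by blast
  define \<beta> where "\<beta> = min (\<alpha>/2) 1 / 3 powr p"
  have b0: "\<beta> > 0" unfolding \<beta>_def using a by simp
  have p0: "p > 0" "p > 1" using p2 by auto
  define \<gamma> where "\<gamma> = p * \<beta> * (1/2) powr (p - 1)"
  have g0: "\<gamma> > 0" unfolding \<gamma>_def using b0 p0 by simp
  have "g (l *\<^sub>R x + (1 - l) *\<^sub>R y) powr p + \<gamma> / p * l * (1 - l) * g (x - y) powr p
              \<le> l * g x powr p + (1 - l) * g y powr p" if l: "l \<in> {0..1}" for x y l
  proof -
    define z where "z = l *\<^sub>R x + (1 - l) *\<^sub>R y"
    define V where "V = VV z"
    define P where "P = p * g z powr (p - 1)"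
    define G where "G = g (x - y) powr p"
    have l0: "0 \<le> l" "l \<le> 1" using l by auto
    have h1: "\<beta> * g (x - z) powr p + g z powr p + P * inner V (x - z) \<le> g x powr p"
      unfolding \<beta>_def V_def P_def by (rule SB_F1[OF a H])
    have h2: "\<beta> * g (y - z) powr p + g z powr p + P * inner V (y - z) \<le> g y powr p"
      unfolding \<beta>_def V_def P_def by (rule SB_F1[OF a H])
    have xz: "x - z = (1 - l) *\<^sub>R (x - y)" unfolding z_def by (simp add: algebra_simps)
    have yz: "y - z = (- l) *\<^sub>R (x - y)" unfolding z_def by (simp add: algebra_simps)
    have gxz: "g (x - z) powr p = (1 - l) powr p * G"
      unfolding xz G_def using l0 g_nonneg by (simp add: g_scale powr_mult)
    have gyz: "g (y - z) powr p = l powr p * G"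
      unfolding yz G_def using l0 g_nonneg by (simp add: g_scale powr_mult)
    have lin: "l * inner V (x - z) + (1 - l) * inner V (y - z) = 0"
      unfolding xz yz by (simp add: algebra_simps)
    have "l * (\<beta> * g (x - z) powr p + g z powr p + P * inner V (x - z))
        + (1 - l) * (\<beta> * g (y - z) powr p + g z powr p + P * inner V (y - z))
        \<le> l * g x powr p + (1 - l) * g y powr p"
      using h1 h2 l0 by (intro add_mono mult_left_mono) auto
    hence main: "\<beta> * (l * (1 - l) powr p + (1 - l) * l powr p) * G + g z powr p
        \<le> l * g x powr p + (1 - l) * g y powr p"
    proof -
      assume a1: "l * (\<beta> * g (x - z) powr p + g z powr p + P * inner V (x - z))
        + (1 - l) * (\<beta> * g (y - z) powr p + g z powr p + P * inner V (y - z))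
        \<le> l * g x powr p + (1 - l) * g y powr p"
      have "l * (\<beta> * g (x - z) powr p + g z powr p + P * inner V (x - z))
        + (1 - l) * (\<beta> * g (y - z) powr p + g z powr p + P * inner V (y - z))
        = \<beta> * (l * (1 - l) powr p + (1 - l) * l powr p) * G + g z powr p
          + P * (l * inner V (x - z) + (1 - l) * inner V (y - z))"
        unfolding gxz gyz by (simp add: algebra_simps)
      then show ?thesis using a1 lin by simp
    qed
    have "(1/2) powr (p - 1) \<le> (1 - l) powr (p - 1) + l powr (p - 1)"
    proof (cases "l \<ge> 1/2")
      case True
      hence "(1/2) powr (p - 1) \<le> l powr (p - 1)" using p0 by (intro powr_mono2) auto
      then show ?thesis by (simp add: add_increasing)
    next
      case False
      hence "(1/2) powr (p - 1) \<le> (1 - l) powr (p - 1)" using p0 by (intro powr_mono2) auto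
      then show ?thesis by (simp add: add_increasing2)
    qed
    hence "l * (1 - l) * (1/2) powr (p - 1) \<le> l * (1 - l) * ((1 - l) powr (p - 1) + l powr (p - 1))"
      using l0 by (intro mult_left_mono) auto
    also have "\<dots> = l * (1 - l) powr p + (1 - l) * l powr p"
    proof -
      have s1: "(1 - l) powr p = (1 - l) * (1 - l) powr (p - 1)" using powr_split[of "1 - l" p] l0 p0 by simp
      have s2: "l powr p = l * l powr (p - 1)" using powr_split[of l p] l0 p0 by simp
      show ?thesis by (simp only: s1 s2) (simp add: algebra_simps)
    qed
    finally have "\<beta> * (l * (1 - l) * (1/2) powr (p - 1)) * G \<le> \<beta> * (l * (1 - l) powr p + (1 - l) * l powr p) * G"
      using b0 G_def by (intro mult_right_mono mult_left_mono) auto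
    moreover have "\<gamma> / p * l * (1 - l) * G = \<beta> * (l * (1 - l) * (1/2) powr (p - 1)) * G"
      unfolding \<gamma>_def using p0 by simp
    ultimately show ?thesis using main unfolding z_def G_def by linarith
  qed
  then show ?thesis unfolding PF_def using g0 by blast
qed

definition YY where "YY d = (SOME y. y \<in> C \<and> inner y d = sf d)"
lemma YY: "YY d \<in> C" "inner (YY d) d = sf d"
proof -
  have "\<exists>y. y \<in> C \<and> inner y d = sf d" using sf_attain by blast
  from someI_ex[OF this] show "YY d \<in> C" "inner (YY d) d = sf d" unfolding YY_def by auto
qed

lemma argmax_g1: assumes "d \<noteq> 0" "y \<in> C" "inner y d = sf d" shows "g y = 1"
proof -
  have "sf d \<le> g y * sf d" using inner_gs[of y d] assms by simp
  hence "1 \<le> g y" using sf_pos[OF assms(1)] by simp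
  moreover have "g y \<le> 1" using assms g_inC by simp
  ultimately show ?thesis by simp
qed

lemma sf_scale: "sf (c *\<^sub>R d) = \<bar>c\<bar> * sf d"
proof (cases "c \<ge> 0")
  case True then show ?thesis using sf_scale_pos by simp
next
  case False
  have "sf (c *\<^sub>R d) = sf (- ((- c) *\<^sub>R d))" by simp
  also have "\<dots> = (- c) * sf d" using sf_neg sf_scale_pos[of "-c" d] False by simp
  finally show ?thesis using False by simp
qed

lemma pq_pos: "0 < q - 1" "q - 1 \<le> 1" "1 < p" using q1 q2 p2 by auto

context
  fixes \<alpha> :: real
  assumes a: "\<alpha> > 0"
    and H: "\<And>x y d. g x = 1 \<Longrightarrow> g y = 1 \<Longrightarrow> sf d = 1 \<Longrightarrow> inner y d = 1 \<Longrightarrow>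
               \<alpha> * g (y - x) powr p \<le> inner d (y - x)"
begin

lemma half: assumes "d \<noteq> 0" "y1 \<in> C" "inner y1 d = sf d" "g y2 = 1"
  shows "\<alpha> * sf d * g (y1 - y2) powr p \<le> inner d (y1 - y2)"
proof -
  have sp: "sf d > 0" using sf_pos[OF assms(1)] .
  define e where "e = d /\<^sub>R sf d"
  have se: "sf e = 1" unfolding e_def using sf_scale_pos[of "inverse (sf d)" d] sp by simp
  have ye: "inner y1 e = 1" unfolding e_def using assms(3) sp by simp
  have g1: "g y1 = 1" using argmax_g1[OF assms(1-3)] .
  have "\<alpha> * g (y1 - y2) powr p \<le> inner e (y1 - y2)" using H[OF assms(4) g1 se ye] .
  hence "sf d * (\<alpha> * g (y1 - y2) powr p) \<le> sf d * inner e (y1 - y2)" using sp by simp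
  moreover have "sf d * inner e (y1 - y2) = inner d (y1 - y2)" unfolding e_def using sp by simp
  ultimately show ?thesis by (simp add: mult_ac)
qed

lemma key: assumes "d1 \<noteq> 0" "y1 \<in> C" "inner y1 d1 = sf d1" "d2 \<noteq> 0" "y2 \<in> C" "inner y2 d2 = sf d2"
  shows "\<alpha> * (sf d1 + sf d2) * g (y1 - y2) powr p \<le> inner (d1 - d2) (y1 - y2)"
proof -
  have 1: "\<alpha> * sf d1 * g (y1 - y2) powr p \<le> inner d1 (y1 - y2)"
    using half[OF assms(1-3) argmax_g1[OF assms(4-6)]] .
  have 2: "\<alpha> * sf d2 * g (y2 - y1) powr p \<le> inner d2 (y2 - y1)"
    using half[OF assms(4-6) argmax_g1[OF assms(1-3)]] .
  have "g (y2 - y1) = g (y1 - y2)" using g_commute by blast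
  moreover have "inner d2 (y2 - y1) = - inner d2 (y1 - y2)" by (simp add: inner_diff_right)
  ultimately show ?thesis using 1 2 by (simp add: inner_diff_left algebra_simps)
qed

lemma hold: assumes "d1 \<noteq> 0" "y1 \<in> C" "inner y1 d1 = sf d1" "d2 \<noteq> 0" "y2 \<in> C" "inner y2 d2 = sf d2"
  shows "g (y1 - y2) \<le> (sf (d1 - d2) / (\<alpha> * (sf d1 + sf d2))) powr (q - 1)"
proof (cases "y1 = y2")
  case True then show ?thesis by simp
next
  case False
  define G where "G = g (y1 - y2)"
  have G: "G > 0" unfolding G_def using g_pos False by simp
  define S where "S = sf d1 + sf d2"
  have S: "S > 0" unfolding S_def using sf_pos assms by (simp add: add_pos_pos)
  have "\<alpha> * S * G powr p \<le> inner (d1 - d2) (y1 - y2)" using key[OF assms] S_def G_def by simp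
  also have "\<dots> \<le> G * sf (d1 - d2)" using inner_gs[of "y1 - y2" "d1 - d2"] G_def by (simp add: inner_commute)
  finally have "\<alpha> * S * (G * G powr (p - 1)) \<le> G * sf (d1 - d2)"
    using powr_split[of G p] G pq_pos by simp
  hence "G * (\<alpha> * S * G powr (p - 1)) \<le> G * sf (d1 - d2)" by (simp add: mult_ac)
  hence "\<alpha> * S * G powr (p - 1) \<le> sf (d1 - d2)" using G by simp
  hence le: "G powr (p - 1) \<le> sf (d1 - d2) / (\<alpha> * S)" using a S by (simp add: field_simps)
  have "G = (G powr (p - 1)) powr (q - 1)" using G pq1 by (simp add: powr_powr)
  also have "\<dots> \<le> (sf (d1 - d2) / (\<alpha> * S)) powr (q - 1)" using le pq_pos by (intro powr_mono2) auto
  finally show ?thesis unfolding G_def S_def .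
qed

lemma sf_deriv: assumes "d \<noteq> 0" shows "(sf has_derivative (\<lambda>h. inner (YY d) h)) (at d)"
proof (rule ldiff[OF q1])
  define M where "M = (1 / (\<alpha> * sf d)) powr (q - 1) * RR powr q"
  have sp: "sf d > 0" using sf_pos[OF assms] .
  show "0 \<le> M" unfolding M_def by simp
  fix z
  define E where "E = sf z - sf d - inner (YY d) (z - d)"
  have Ez: "E = sf z - inner (YY d) z" unfolding E_def using YY[of d] by (simp add: inner_diff_right)
  have E0: "0 \<le> E" unfolding Ez using sf_upper[OF YY(1)] by simp
  have "E \<le> M * norm (z - d) powr q"
  proof (cases "z = 0")
    case True then show ?thesis using Ez YY[of d] E0 unfolding M_def by simp
  next
    case False
    have "E = inner (YY z - YY d) z" unfolding Ez using YY[of z] by (simp add: inner_diff_left)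
    also have "\<dots> \<le> inner (YY z - YY d) (z - d)"
      using sf_upper[OF YY(1)[of z], of d] YY[of d] by (simp add: inner_diff_left inner_diff_right)
    also have "\<dots> \<le> g (YY z - YY d) * sf (z - d)" by (rule inner_gs)
    also have "\<dots> \<le> (sf (z - d) / (\<alpha> * (sf z + sf d))) powr (q - 1) * sf (z - d)"
      using hold[OF False YY(1) YY(2) assms YY(1) YY(2)] sf_nonneg by (simp add: mult_right_mono)
    also have "\<dots> \<le> (sf (z - d) / (\<alpha> * sf d)) powr (q - 1) * sf (z - d)"
    proof -
      have "sf (z - d) / (\<alpha> * (sf z + sf d)) \<le> sf (z - d) / (\<alpha> * sf d)"
        using a sp sf_nonneg[of z] sf_nonneg[of "z - d"]
        by (intro divide_left_mono mult_left_mono mult_pos_pos) auto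
      then show ?thesis using sf_nonneg pq_pos a sp
        by (intro mult_right_mono powr_mono2) auto
    qed
    also have "\<dots> = (1 / (\<alpha> * sf d)) powr (q - 1) * sf (z - d) powr q"
      using powr_split[of "sf (z - d)" q] q1 sf_nonneg[of "z - d"] a sp
      by (simp add: powr_divide powr_mult divide_simps)
    also have "\<dots> \<le> (1 / (\<alpha> * sf d)) powr (q - 1) * (RR * norm (z - d)) powr q"
      using sf_unorm[of "z - d"] sf_nonneg q1 by (intro mult_left_mono powr_mono2) auto
    also have "\<dots> = M * norm (z - d) powr q" unfolding M_def using RR by (simp add: powr_mult)
    finally show ?thesis .
  qed
  then show "\<bar>sf z - sf d - inner (YY d) (z - d)\<bar> \<le> M * norm (z - d) powr q"
    using E0 E_def by simp
qed

lemma SB_D_aux: "PD"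
proof -
  define c where "c = (1 / (2 * \<alpha>)) powr (q - 1)"
  have c: "c > 0" unfolding c_def using a by simp
  have diff: "sf differentiable (at d)" if "gauge (polar C) d = 1" for d
  proof -
    have "d \<noteq> 0" using that gp_eq by auto
    then show ?thesis using sf_deriv differentiableI by blast
  qed
  have "g (grad sf d1 - grad sf d2) \<le> c * gauge (polar C) (d1 - d2) powr (q - 1)"
    if "gauge (polar C) d1 = 1" "gauge (polar C) d2 = 1" for d1 d2
  proof -
    have s: "sf d1 = 1" "sf d2 = 1" using that gp_eq by auto
    hence nz: "d1 \<noteq> 0" "d2 \<noteq> 0" by auto
    have "grad sf d1 = YY d1" "grad sf d2 = YY d2" using grad_eq sf_deriv nz by blast+
    hence "g (grad sf d1 - grad sf d2) \<le> (sf (d1 - d2) / (\<alpha> * 2)) powr (q - 1)"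
      using hold[OF nz(1) YY(1) YY(2) nz(2) YY(1) YY(2)] s by simp
    also have "\<dots> = c * sf (d1 - d2) powr (q - 1)" unfolding c_def
      using a sf_nonneg[of "d1 - d2"] by (simp add: powr_mult[symmetric] mult.commute)
    finally show ?thesis using gp_eq by simp
  qed
  then show ?thesis unfolding PD_def using c diff by blast
qed

definition GG where "GG d = (q * sf d powr (q - 1)) *\<^sub>R YY d"

lemma E1: "sf a powr q + inner (GG a) (z - a) \<le> sf z powr q"
proof -
  have "inner (YY a) (z - a) \<le> sf z - sf a"
    using sf_upper[OF YY(1)[of a], of z] YY(2)[of a] by (simp add: inner_diff_right)
  hence "q * sf a powr (q - 1) * inner (YY a) (z - a) \<le> q * sf a powr (q - 1) * (sf z - sf a)"
    using q1 by (intro mult_left_mono) auto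
  moreover have "sf a powr q + q * sf a powr (q - 1) * (sf z - sf a) \<le> sf z powr q"
    using tan_powr[of q "sf z" "sf a"] q1 sf_nonneg by simp
  ultimately show ?thesis unfolding GG_def by simp
qed

definition "LL = q * ((1 / \<alpha>) powr (q - 1) + 1)"

lemma E2': assumes "sf b \<le> sf a" shows "g (GG a - GG b) \<le> LL * sf (a - b) powr (q - 1)"
proof -
  have L0: "q \<le> LL" unfolding LL_def using q1 by simp
  consider "a = 0" | "a \<noteq> 0" "b = 0" | "a \<noteq> 0" "b \<noteq> 0" by blast
  then show ?thesis
  proof cases
    case 1
    hence "b = 0" using assms sf_pos by force
    then show ?thesis using 1 unfolding LL_def by simp
  next
    case 2
    have "g (GG a - GG b) = q * sf a powr (q - 1) * g (YY a)" using 2 q1 unfolding GG_def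
      by (simp add: g_scale)
    also have "\<dots> \<le> q * sf a powr (q - 1)" using YY(1)[of a] g_inC q1
      by (simp add: mult_left_le)
    also have "\<dots> \<le> LL * sf (a - b) powr (q - 1)" using 2 L0 by (simp add: mult_right_mono)
    finally show ?thesis .
  next
    case 3
    define A where "A = sf a powr (q - 1)"
    define B where "B = sf b powr (q - 1)"
    define S where "S = sf (a - b) powr (q - 1)"
    have AB: "B \<le> A" unfolding A_def B_def using assms sf_nonneg pq_pos by (intro powr_mono2) auto
    have B0: "0 \<le> B" "0 \<le> A" "0 \<le> S" unfolding A_def B_def S_def by auto
    have eq: "GG a - GG b = q *\<^sub>R (A *\<^sub>R (YY a - YY b) + (A - B) *\<^sub>R YY b)"
      unfolding GG_def A_def B_def by (simp add: algebra_simps)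
    have "g (GG a - GG b) = q * g (A *\<^sub>R (YY a - YY b) + (A - B) *\<^sub>R YY b)"
      unfolding eq using q1 by (simp add: g_scale)
    also have "\<dots> \<le> q * (g (A *\<^sub>R (YY a - YY b)) + g ((A - B) *\<^sub>R YY b))"
      by (intro mult_left_mono g_tri) (use q1 in auto)
    also have "\<dots> = q * (A * g (YY a - YY b) + (A - B) * g (YY b))"
      using B0 AB by (simp add: g_scale)
    also have "\<dots> \<le> q * ((1 / \<alpha>) powr (q - 1) * S + S)"
    proof -
      have h: "g (YY a - YY b) \<le> (sf (a - b) / (\<alpha> * (sf a + sf b))) powr (q - 1)"
        using hold[OF 3(1) YY(1) YY(2) 3(2) YY(1) YY(2)] .
      have sa: "sf a > 0" using sf_pos 3 by auto
      have "A * g (YY a - YY b) \<le> A * (sf (a - b) / (\<alpha> * (sf a + sf b))) powr (q - 1)"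
        using h B0 by (simp add: mult_left_mono)
      also have "\<dots> = (sf a * (sf (a - b) / (\<alpha> * (sf a + sf b)))) powr (q - 1)"
        unfolding A_def
        by (rule powr_mult[symmetric])
      also have "\<dots> \<le> (sf (a - b) / \<alpha>) powr (q - 1)"
      proof -
        have "sf a * (sf (a - b) / (\<alpha> * (sf a + sf b))) = (sf a / (sf a + sf b)) * (sf (a - b) / \<alpha>)"
          by (simp add: field_simps)
        also have "\<dots> \<le> 1 * (sf (a - b) / \<alpha>)"
          using sa sf_nonneg[of b] sf_nonneg[of "a - b"] a
          by (intro mult_right_mono) (auto simp: divide_le_eq_1)
        finally show ?thesis using sf_nonneg a sa pq_pos by (intro powr_mono2) auto
      qed
      also have "\<dots> = (1 / \<alpha>) powr (q - 1) * S" unfolding S_def using sf_nonneg a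
        by (simp add: powr_mult[symmetric])
      finally have 1: "A * g (YY a - YY b) \<le> (1 / \<alpha>) powr (q - 1) * S" .
      have "A \<le> B + (sf a - sf b) powr (q - 1)"
        using sub_powr[of "q - 1" "sf b" "sf a - sf b"] pq_pos assms sf_nonneg unfolding A_def B_def by simp
      also have "(sf a - sf b) powr (q - 1) \<le> S" unfolding S_def
        using sf_diff[of a b] assms pq_pos by (intro powr_mono2) auto
      finally have "A - B \<le> S" by simp
      moreover have "g (YY b) \<le> 1" using YY(1) g_inC by blast
      ultimately have 2: "(A - B) * g (YY b) \<le> S"
        using AB g_nonneg by (metis diff_ge_0_iff_ge mult_left_le order_trans)
      show ?thesis using 1 2 q1 by (intro mult_left_mono add_mono) auto
    qed
    also have "\<dots> = LL * S" unfolding LL_def by (simp add: algebra_simps)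
    finally show ?thesis unfolding S_def .
  qed
qed

lemma E2: "g (GG a - GG b) \<le> LL * sf (a - b) powr (q - 1)"
proof (cases "sf b \<le> sf a")
  case True then show ?thesis using E2' by blast
next
  case False
  hence "g (GG b - GG a) \<le> LL * sf (b - a) powr (q - 1)" using E2' by simp
  then show ?thesis using g_commute sf_commute by metis
qed

lemma E3: "sf z powr q - sf a powr q - inner (GG a) (z - a) \<le> LL * sf (z - a) powr q"
proof -
  have "sf z powr q - sf a powr q \<le> inner (GG z) (z - a)"
    using E1[of z a] by (simp add: inner_diff_right)
  hence "sf z powr q - sf a powr q - inner (GG a) (z - a) \<le> inner (GG z - GG a) (z - a)"
    by (simp add: inner_diff_left)
  also have "\<dots> \<le> g (GG z - GG a) * sf (z - a)" by (rule inner_gs)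
  also have "\<dots> \<le> LL * sf (z - a) powr (q - 1) * sf (z - a)"
    using E2 sf_nonneg by (simp add: mult_right_mono)
  also have "\<dots> = LL * sf (z - a) powr q" using powr_split[of "sf (z - a)" q] sf_nonneg q1 by simp
  finally show ?thesis .
qed

lemma SB_E_aux: "PE"
proof -
  have L: "LL > 0" unfolding LL_def using q1 by (intro mult_pos_pos add_nonneg_pos) auto
  have der: "((\<lambda>d. sf d powr q) has_derivative (\<lambda>h. inner (GG a) h)) (at a)" for a
  proof (rule ldiff[OF q1, of "LL * RR powr q"])
    show "0 \<le> LL * RR powr q" using L by simp
    fix z
    have lo: "0 \<le> sf z powr q - sf a powr q - inner (GG a) (z - a)" using E1[of a z] by simp
    have "sf z powr q - sf a powr q - inner (GG a) (z - a) \<le> LL * sf (z - a) powr q" by (rule E3)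
    also have "\<dots> \<le> LL * (RR * norm (z - a)) powr q"
      using L sf_unorm sf_nonneg q1 by (intro mult_left_mono powr_mono2) auto
    also have "\<dots> = LL * RR powr q * norm (z - a) powr q" using RR by (simp add: powr_mult)
    finally show "\<bar>sf z powr q - sf a powr q - inner (GG a) (z - a)\<bar> \<le> LL * RR powr q * norm (z - a) powr q"
      using lo by simp
  qed
  have diffon: "(\<lambda>d. sf d powr q) differentiable_on UNIV"
    unfolding differentiable_on_def using der by (blast intro: differentiable_at_withinI differentiableI)
  define c where "c = 2 * LL * q"
  have c: "c > 0" unfolding c_def using L q1 by simp
  have "l * sf d powr q + (1 - l) * sf d' powr q
        \<le> sf (l *\<^sub>R d + (1 - l) *\<^sub>R d') powr q + c / q * l * (1 - l) * gauge (polar C) (d - d') powr q"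
    if l: "l \<in> {0..1}" for d d' l
  proof -
    define z where "z = l *\<^sub>R d + (1 - l) *\<^sub>R d'"
    define S where "S = sf (d - d') powr q"
    have l0: "0 \<le> l" "l \<le> 1" using l by auto
    have dz: "d - z = (1 - l) *\<^sub>R (d - d')" unfolding z_def by (simp add: algebra_simps)
    have d'z: "d' - z = (- l) *\<^sub>R (d - d')" unfolding z_def by (simp add: algebra_simps)
    have s1: "sf (d - z) powr q = (1 - l) powr q * S"
      unfolding dz S_def using l0 sf_nonneg by (simp add: sf_scale powr_mult)
    have s2: "sf (d' - z) powr q = l powr q * S"
      unfolding d'z S_def using l0 sf_nonneg by (simp add: sf_scale powr_mult)
    have lin: "l * inner (GG z) (d - z) + (1 - l) * inner (GG z) (d' - z) = 0"
      unfolding dz d'z by (simp add: algebra_simps)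
    have h1: "l * (sf d powr q - sf z powr q - inner (GG z) (d - z)) \<le> l * (LL * ((1 - l) powr q * S))"
      using E3[of d z] s1 l0 by (intro mult_left_mono) auto
    have h2: "(1 - l) * (sf d' powr q - sf z powr q - inner (GG z) (d' - z)) \<le> (1 - l) * (LL * (l powr q * S))"
      using E3[of d' z] s2 l0 by (intro mult_left_mono) auto
    have p1: "(1 - l) powr q \<le> 1 - l" using powr_mono'[of 1 q "1 - l"] l0 q1 by simp
    have p2': "l powr q \<le> l" using powr_mono'[of 1 q l] l0 q1 by simp
    have S0: "S \<ge> 0" unfolding S_def by simp
    have "l * (LL * ((1 - l) powr q * S)) \<le> l * (LL * ((1 - l) * S))"
      using p1 S0 L l0 by (intro mult_left_mono mult_right_mono) auto
    moreover have "(1 - l) * (LL * (l powr q * S)) \<le> (1 - l) * (LL * (l * S))"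
      using p2' S0 L l0 by (intro mult_left_mono mult_right_mono) auto
    ultimately have "l * (sf d powr q - sf z powr q - inner (GG z) (d - z))
        + (1 - l) * (sf d' powr q - sf z powr q - inner (GG z) (d' - z))
        \<le> 2 * LL * l * (1 - l) * S"
      using h1 h2 by (simp add: algebra_simps)
    moreover have "l * (sf d powr q - sf z powr q - inner (GG z) (d - z))
        + (1 - l) * (sf d' powr q - sf z powr q - inner (GG z) (d' - z))
        = l * sf d powr q + (1 - l) * sf d' powr q - sf z powr q
          - (l * inner (GG z) (d - z) + (1 - l) * inner (GG z) (d' - z))"
      by (simp add: algebra_simps)
    moreover have "c / q * l * (1 - l) * gauge (polar C) (d - d') powr q = 2 * LL * l * (1 - l) * S"
      unfolding c_def S_def gp_eq using q1 by simp
    ultimately show ?thesis using lin unfolding z_def by linarith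
  qed
  then show ?thesis unfolding PE_def using diffon c by blast
qed

end

lemma SB_D: assumes "PSB" shows "PD"
  using assms SB_D_aux unfolding PSB_def by blast

lemma SB_E: assumes "PSB" shows "PE"
  using assms SB_E_aux unfolding PSB_def by blast

lemma grad_argmax:
  assumes dif: "sf differentiable (at e)" and y: "y \<in> C" "inner y e = sf e"
  shows "grad sf e = y"
proof -
  obtain f' where f': "(sf has_derivative f') (at e)" using dif unfolding differentiable_def by blast
  have "f' = inner y"
  proof (rule subgrad[OF f'])
    fix z
    show "sf e + inner y (z - e) \<le> sf z"
      using sf_upper[OF y(1), of z] y(2) by (simp add: inner_diff_right)
  qed
  then show ?thesis using grad_eq f' by (metis eta_contract_eq)
qed

lemma D_SB: assumes "PD" shows "PSB"
proof -
  obtain c where c: "c > 0"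
    and Dd: "\<And>d. sf d = 1 \<Longrightarrow> sf differentiable (at d)"
    and Dh: "\<And>d1 d2. sf d1 = 1 \<Longrightarrow> sf d2 = 1 \<Longrightarrow>
                g (grad sf d1 - grad sf d2) \<le> c * sf (d1 - d2) powr (q - 1)"
    using assms unfolding PD_def gp_eq by blast
  define K where "K = (c + 2) * 2 powr (q - 1)"
  have K: "K > 0" unfolding K_def using c by simp
  have "1 / (2 * (2 * K) powr (p - 1)) * g (y - x) powr p \<le> inner d (y - x)"
    if xy: "g x = 1" "g y = 1" "sf d = 1" "inner y d = 1" for x y d
  proof -
    obtain v where v: "sf v = 1" "inner (x - y) v = g (x - y)" using DA by blast
    define \<gamma> where "\<gamma> = g (x - y)"
    have yC: "y \<in> C" "x \<in> C" using xy g_inC by auto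
    have A0: "0 \<le> inner d (y - x)"
      using sf_upper[OF yC(2), of d] xy by (simp add: inner_diff_right inner_commute)
    have gy: "grad sf d = y" using grad_argmax[OF Dd[OF xy(3)] yC(1)] xy by simp
    have main: "t * \<gamma> - K * t powr q \<le> inner d (y - x)" if t: "t > 0" for t
    proof -
      define d' where "d' = d + t *\<^sub>R v"
      define y' where "y' = YY d'"
      have y'C: "y' \<in> C" unfolding y'_def using YY by blast
      have ineq1: "t * \<gamma> - t * g (y' - y) \<le> inner d (y - x)"
      proof -
        have 1: "inner x d' \<le> inner y' d'" using sf_upper[OF yC(2), of d'] YY(2)[of d'] y'_def by simp
        have 2: "inner y' d \<le> 1" using sf_upper[OF y'C, of d] xy by simp
        have 3: "inner (y' - y) v \<le> g (y' - y)" using inner_gs[of "y' - y" v] v by simp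
        have "inner x d + t * inner x v \<le> inner y' d + t * inner y' v"
          using 1 unfolding d'_def by (simp add: inner_add_right)
        hence "t * (inner x v - inner y' v) \<le> inner y d - inner x d" using 2 xy by (simp add: algebra_simps)
        moreover have "inner x v - inner y' v = \<gamma> - inner (y' - y) v"
          using v \<gamma>_def by (simp add: inner_diff_left)
        moreover have "t * (\<gamma> - g (y' - y)) \<le> t * (\<gamma> - inner (y' - y) v)"
          using 3 t by (intro mult_left_mono) auto
        ultimately show ?thesis by (simp add: inner_diff_right inner_commute algebra_simps)
      qed
      have bound: "g (y' - y) \<le> K * t powr (q - 1)"
      proof (cases "t \<le> 1/2")
        case True
        define s' where "s' = sf d'"
        have st: "sf (t *\<^sub>R v) = t" using sf_scale_pos[of t v] t v by simp
        have "\<bar>s' - 1\<bar> \<le> t" using sf_abs_diff[of d' d] xy st unfolding s'_def d'_def by simp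
        hence s'p: "s' \<ge> 1/2" using True by simp
        define e' where "e' = d' /\<^sub>R s'"
        have se': "sf e' = 1" unfolding e'_def using sf_scale_pos[of "inverse s'" d'] s'p s'_def by simp
        have "inner y' e' = 1" unfolding e'_def using YY(2)[of d'] y'_def s'_def s'p by simp
        hence ye': "inner y' e' = sf e'" using se' by simp
        have gy': "grad sf e' = y'" using grad_argmax[OF Dd[OF se'] y'C ye'] .
        have "g (y' - y) \<le> c * sf (e' - d) powr (q - 1)" using Dh[OF se' xy(3)] gy gy' by simp
        also have "sf (e' - d) \<le> 2 * t"
        proof -
          have "e' - d = (inverse s' - 1) *\<^sub>R d' + t *\<^sub>R v" unfolding e'_def d'_def
            by (simp add: algebra_simps)
          hence "sf (e' - d) \<le> sf ((inverse s' - 1) *\<^sub>R d') + sf (t *\<^sub>R v)" using sf_add by simp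
          also have "sf ((inverse s' - 1) *\<^sub>R d') = \<bar>inverse s' - 1\<bar> * s'" using sf_scale s'_def by simp
          also have "\<dots> = \<bar>(inverse s' - 1) * s'\<bar>" using s'p by (simp add: abs_mult)
          also have "(inverse s' - 1) * s' = 1 - s'" using s'p by (simp add: field_simps)
          finally show ?thesis using st \<open>\<bar>s' - 1\<bar> \<le> t\<close> by simp
        qed
        hence "c * sf (e' - d) powr (q - 1) \<le> c * (2 * t) powr (q - 1)"
          using c pq_pos sf_nonneg by (intro mult_left_mono powr_mono2) auto
        also have "\<dots> = c * 2 powr (q - 1) * t powr (q - 1)" using t by (simp add: powr_mult)
        also have "\<dots> \<le> K * t powr (q - 1)" unfolding K_def
          by (intro mult_right_mono) (auto simp: algebra_simps)
        finally show ?thesis .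
      next
        case False
        have "g (y' - y) \<le> 2" using g_C2[OF y'C yC(1)] .
        also have "2 \<le> 2 * (2 * t) powr (q - 1)" using False pq_pos by (simp add: ge_one_powr_ge_zero)
        also have "\<dots> = 2 * 2 powr (q - 1) * t powr (q - 1)" using t by (simp add: powr_mult)
        also have "\<dots> \<le> K * t powr (q - 1)" unfolding K_def using c
          by (intro mult_right_mono) auto
        finally show ?thesis .
      qed
      have "t * g (y' - y) \<le> t * (K * t powr (q - 1))" using bound t by simp
      also have "\<dots> = K * t powr q" using powr_split[of t q] t q1 by simp
      finally show ?thesis using ineq1 by linarith
    qed
    have "\<gamma> powr p / (2 * (2 * K) powr (p - 1)) \<le> inner d (y - x)"
      using opt_powr[OF pq1 pq_pos(3) q1 _ K A0] main \<gamma>_def g_nonneg by blast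
    then show ?thesis using \<gamma>_def g_commute[of x y] by simp
  qed
  then show ?thesis unfolding PSB_def using K by (intro exI[of _ "1 / (2 * (2 * K) powr (p - 1))"]) auto
qed

lemma E_SB: assumes "PE" shows "PSB"
proof -
  obtain c where c: "c > 0"
    and H: "\<And>d d' l. l \<in> {0..1} \<Longrightarrow>
      l * sf d powr q + (1 - l) * sf d' powr q
        \<le> sf (l *\<^sub>R d + (1 - l) *\<^sub>R d') powr q + c / q * l * (1 - l) * sf (d - d') powr q"
    using assms unfolding PE_def gp_eq by blast
  define K where "K = c * 2 powr q / (2 * q * q)"
  have K: "K > 0" unfolding K_def using c q1 by simp
  have "1 / (2 * (2 * K) powr (p - 1)) * g (y - x) powr p \<le> inner d (y - x)"
    if xy: "g x = 1" "g y = 1" "sf d = 1" "inner y d = 1" for x y d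
  proof -
    obtain v where v: "sf v = 1" "inner (x - y) v = g (x - y)" using DA by blast
    define \<gamma> where "\<gamma> = g (x - y)"
    have yC: "y \<in> C" "x \<in> C" using xy g_inC by auto
    have A0: "0 \<le> inner d (y - x)"
      using sf_upper[OF yC(2), of d] xy by (simp add: inner_diff_right inner_commute)
    have main: "t * \<gamma> - K * t powr q \<le> inner d (y - x)" if t: "t > 0" for t
    proof -
      define d1 where "d1 = d + t *\<^sub>R v"
      define d2 where "d2 = d - t *\<^sub>R v"
      have mid: "(1/2) *\<^sub>R d1 + (1 - 1/2) *\<^sub>R d2 = d" unfolding d1_def d2_def
        by (simp add: algebra_simps scaleR_2[symmetric])
      have dd: "sf (d1 - d2) = 2 * t" unfolding d1_def d2_def using sf_scale_pos[of "2 * t" v] t v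
        by (simp add: scaleR_2[symmetric] algebra_simps)
      have h: "(1/2) * sf d1 powr q + (1 - 1/2) * sf d2 powr q
          \<le> sf d powr q + c / q * (1/2) * (1 - 1/2) * (2 * t) powr q"
        using H[of "1/2" d1 d2] mid dd by simp
      have t1: "1 + q * (sf d1 - 1) \<le> sf d1 powr q" using tan_powr[of q "sf d1" 1] q1 sf_nonneg by simp
      have t2: "1 + q * (sf d2 - 1) \<le> sf d2 powr q" using tan_powr[of q "sf d2" 1] q1 sf_nonneg by simp
      have s1: "inner x d + t * inner x v \<le> sf d1"
        using sf_upper[OF yC(2), of d1] unfolding d1_def by (simp add: inner_add_right)
      have s2: "1 - t * inner y v \<le> sf d2"
        using sf_upper[OF yC(1), of d2] xy unfolding d2_def by (simp add: inner_diff_right)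
      have ip: "inner x v - inner y v = \<gamma>" using v \<gamma>_def by (simp add: inner_diff_left)
      have "(2 * t) powr q = 2 powr q * t powr q" using t by (simp add: powr_mult)
      hence h2: "sf d1 powr q + sf d2 powr q \<le> 2 + c / q / 2 * 2 powr q * t powr q"
        using h xy by (simp add: algebra_simps)
      have "q * (sf d1 + sf d2 - 2) \<le> c / q / 2 * 2 powr q * t powr q"
        using t1 t2 h2 by (simp add: algebra_simps)
      moreover have "t * \<gamma> - inner d (y - x) \<le> sf d1 + sf d2 - 2"
        using s1 s2 ip xy by (simp add: inner_diff_right inner_commute algebra_simps)
      ultimately have "q * (t * \<gamma> - inner d (y - x)) \<le> c / q / 2 * 2 powr q * t powr q"
        using q1 by (smt (verit) mult_left_mono)
      hence "t * \<gamma> - inner d (y - x) \<le> (c / q / 2 * 2 powr q * t powr q) / q"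
        using q1 by (simp add: field_simps)
      also have "\<dots> = K * t powr q" unfolding K_def by (simp add: field_simps)
      finally show ?thesis by linarith
    qed
    have "\<gamma> powr p / (2 * (2 * K) powr (p - 1)) \<le> inner d (y - x)"
      using opt_powr[OF pq1 pq_pos(3) q1 _ K A0] main \<gamma>_def g_nonneg by blast
    then show ?thesis using \<gamma>_def g_commute[of x y] by simp
  qed
  then show ?thesis unfolding PSB_def using K by (intro exI[of _ "1 / (2 * (2 * K) powr (p - 1))"]) auto
qed

lemma all_equiv: "(PA \<longleftrightarrow> PB) \<and> (PA \<longleftrightarrow> PC) \<and> (PA \<longleftrightarrow> PD) \<and> (PA \<longleftrightarrow> PE) \<and> (PA \<longleftrightarrow> PF)"
proof -
  have AS: "PA \<longleftrightarrow> PSB" using A_A' A'_B B_SB SB_F F_A' by blast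
  have "PB \<longleftrightarrow> PSB" using A_A' A'_B B_SB SB_F F_A' by blast
  moreover have "PC \<longleftrightarrow> PSB" using A'_C C_SB SB_F F_A' by blast
  moreover have "PD \<longleftrightarrow> PSB" using SB_D D_SB by blast
  moreover have "PE \<longleftrightarrow> PSB" using SB_E E_SB by blast
  moreover have "PF \<longleftrightarrow> PSB" using SB_F F_A' A'_B B_SB by blast
  ultimately show ?thesis using AS by blast
qed

end


theorem mainTheorem1:
  fixes C :: "'a::euclidean_space set" and p q :: real
  assumes "p \<ge> 2" and "1 < q" and "q \<le> 2" and "1/p + 1/q = 1"
    and "compact C" and "convex C" and "\<forall>x\<in>C. - x \<in> C" and "interior C \<noteq> {}"
  shows
   "let
      A = (\<exists>\<alpha>>0. \<forall>x\<in>C. \<forall>y\<in>C.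
             {(1/2) *\<^sub>R (x + y) + (\<alpha> * gauge C (x - y) powr p) *\<^sub>R b | b. gauge C b \<le> 1} \<subseteq> C);
      B = (\<exists>\<alpha>>0. \<forall>x\<in>C. \<forall>y\<in>frontier C. \<forall>d. d \<in> normal_cone C y \<longrightarrow>
             inner d (y - x) \<ge> \<alpha> * gauge (polar C) d * gauge C (y - x) powr p);
      Cc = (\<exists>\<alpha>>0. \<forall>\<epsilon>\<in>{0..2}. modulus_convexity C \<epsilon> \<ge> \<alpha> * \<epsilon> powr p);
      D = (\<exists>c>0. (\<forall>d. gauge (polar C) d = 1 \<longrightarrow> support_fun C differentiable (at d)) \<and>
             (\<forall>d1 d2. gauge (polar C) d1 = 1 \<longrightarrow> gauge (polar C) d2 = 1 \<longrightarrow>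
                gauge C (grad (support_fun C) d1 - grad (support_fun C) d2)
                  \<le> c * gauge (polar C) (d1 - d2) powr (q - 1)));
      E = ((\<lambda>d. support_fun C d powr q) differentiable_on UNIV \<and>
           (\<exists>c>0. \<forall>d d'. \<forall>l\<in>{0..1}.
              support_fun C (l *\<^sub>R d + (1 - l) *\<^sub>R d') powr q
                + c / q * l * (1 - l) * gauge (polar C) (d - d') powr q
              \<ge> l * support_fun C d powr q + (1 - l) * support_fun C d' powr q));
      F = (\<exists>\<alpha>>0. \<forall>x y. \<forall>l\<in>{0..1}.
              gauge C (l *\<^sub>R x + (1 - l) *\<^sub>R y) powr p
                + \<alpha> / p * l * (1 - l) * gauge C (x - y) powr p
              \<le> l * gauge C x powr p + (1 - l) * gauge C y powr p)
    in (A \<longleftrightarrow> B) \<and> (A \<longleftrightarrow> Cc) \<and> (A \<longleftrightarrow> D) \<and> (A \<longleftrightarrow> E) \<and> (A \<longleftrightarrow> F)"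
proof -
  interpret ucb C p q using assms by unfold_locales auto
  show ?thesis using all_equiv unfolding Let_def PA_def PB_def PC_def PD_def PE_def PF_def .
qed


end
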